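(* Consider the graph on $\mathbb{Z}$ with $u\sim v$ iff $|u-v|=1$ (unit weights). Let $k$ be a positive odd integer, $S=k\mathbb{Z}$, and $0\le\omega\le\pi$. If $\frac{k+1}{2}\sqrt{2-2\cos\omega}<1$, then for all $f\in PW_\omega$, \[ \frac{1-\frac{k+1}{2}\sqrt{2-2\cos\omega}}{\sqrt k}\|f\|_2\le\|f|_S\|_2\le\frac{1+\frac{k+1}{2}\sqrt{2-2\cos\omega}}{\sqrt k}\|f\|_2. \] Moreover, if $(k+1)\sqrt{2-2\cos\omega}<1$, then the quotient of the upper and lower constants in this estimate is at most $1+2(k+1)\sqrt{2-2\cos\omega}$.
   Context: $\ell^2(\mathbb{Z})$ with $\|f\|_2^2=\sum_{j}|f(j)|^2$ and $\|f|_S\|_2^2=\sum_{j\in S}|f(j)|^2$. The Fourier transform is $\widehat f(\xi)=\sum_{j\in\mathbb{Z}}f(j)e^{-ij\xi}$ on $[-\pi,\pi]$ (extended to $\ell^2$ by Plancherel). $PW_\omega=\{f\in\ell^2(\mathbb{Z}):\widehat f(\xi)=0\text{ for a.e. }\xi\in[-\pi,\pi]\setminus[-\omega,\omega]\}$. *)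

theory Defs
  imports "HOL-Analysis.Analysis"
begin

definition ell2_int :: "(int \<Rightarrow> complex) \<Rightarrow> bool" where
  "ell2_int f \<longleftrightarrow> (\<lambda>j. (cmod (f j))\<^sup>2) summable_on UNIV"

definition l2norm_on :: "int set \<Rightarrow> (int \<Rightarrow> complex) \<Rightarrow> real" where
  "l2norm_on S f = sqrt (infsum (\<lambda>j. (cmod (f j))\<^sup>2) S)"

text \<open>Paley-Wiener space PW_omega: f in l2(Z) whose Fourier transform
  (in the L2 sense, i.e. the L2 function on [-pi,pi] whose Fourier
  coefficients are f) vanishes a.e. outside [-omega,omega].
  With hat f(xi) = sum_j f(j) e^{-ij xi}, we have f(j) = 1/(2 pi) int hat f(xi) e^{ij xi}.\<close>
definition paley_wiener :: "real \<Rightarrow> (int \<Rightarrow> complex) set" where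
  "paley_wiener \<omega> = {f. ell2_int f \<and>
     (\<exists>g :: real \<Rightarrow> complex.
        g \<in> borel_measurable lborel \<and>
        set_integrable lborel {-pi..pi} (\<lambda>\<xi>. (cmod (g \<xi>))\<^sup>2) \<and>
        (AE \<xi> in lborel. \<xi> \<in> {-pi..pi} - {-\<omega>..\<omega>} \<longrightarrow> g \<xi> = 0) \<and>
        (\<forall>j::int. f j = (1 / (2 * complex_of_real pi)) *
            (LINT \<xi>:{-pi..pi}|lborel. g \<xi> * exp (\<i> * of_int j * of_real \<xi>))))}"

end

theory Submission
  imports Defs
begin


lemma path_bound:
  fixes h :: "int \<Rightarrow> complex"
  assumes "0 \<le> d"
  shows "cmod (h d - h 0) \<le> (\<Sum>i\<in>{0..<d}. cmod (h (i+1) - h i))"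
  using assms
proof (induction d rule: int_ge_induct)
  case base
  then show ?case by simp
next
  case (step d)
  have "cmod (h (d+1) - h 0) \<le> cmod (h (d+1) - h d) + cmod (h d - h 0)"
    using norm_triangle_ineq[of "h(d+1) - h d" "h d - h 0"] by simp
  also have "\<dots> \<le> cmod (h (d+1) - h d) + (\<Sum>i\<in>{0..<d}. cmod (h (i+1) - h i))"
    using step by simp
  also have "\<dots> = (\<Sum>i\<in>{0..<d+1}. cmod (h (i+1) - h i))"
  proof -
    have "{0..<d+1} = insert d {0..<d}" using step(1) by auto
    then show ?thesis by simp
  qed
  finally show ?case .
qed

lemma half_bound:
  fixes h :: "int \<Rightarrow> complex" and R :: int
  assumes "0 \<le> R"
  shows "(\<Sum>d\<in>{1..R}. (cmod (h d - h 0))\<^sup>2) \<le> (of_int R)\<^sup>2 * (\<Sum>i\<in>{0..<R}. (cmod (h (i+1) - h i))\<^sup>2)"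
proof -
  define a where "a = (\<lambda>i. cmod (h (i+1) - h i))"
  have sq: "(\<Sum>i\<in>{0..<R}. a i)\<^sup>2 \<le> of_int R * (\<Sum>i\<in>{0..<R}. (a i)\<^sup>2)"
    using Cauchy_Schwarz_ineq_sum[of a "\<lambda>_. 1" "{0..<R}"] assms by (simp add: mult.commute)
  have each: "(cmod (h d - h 0))\<^sup>2 \<le> (\<Sum>i\<in>{0..<R}. a i)\<^sup>2" if d: "d \<in> {1..R}" for d
  proof -
    have "cmod (h d - h 0) \<le> (\<Sum>i\<in>{0..<d}. a i)"
      using path_bound[of d h] d unfolding a_def by simp
    also have "\<dots> \<le> (\<Sum>i\<in>{0..<R}. a i)"
      by (rule sum_mono2) (use d in \<open>auto simp: a_def\<close>)
    finally show ?thesis by (simp add: power_mono)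
  qed
  have "(\<Sum>d\<in>{1..R}. (cmod (h d - h 0))\<^sup>2) \<le> (\<Sum>d\<in>{1..R}. (\<Sum>i\<in>{0..<R}. a i)\<^sup>2)"
    by (rule sum_mono) (rule each)
  also have "\<dots> = of_int R * (\<Sum>i\<in>{0..<R}. a i)\<^sup>2"
    using assms by simp
  also have "\<dots> \<le> of_int R * (of_int R * (\<Sum>i\<in>{0..<R}. (a i)\<^sup>2))"
    by (rule mult_left_mono[OF sq]) (use assms in simp)
  finally show ?thesis by (simp add: a_def power2_eq_square mult.assoc)
qed

lemma split_sym:
  fixes G :: "int \<Rightarrow> real" and R :: int
  assumes "0 \<le> R"
  shows "(\<Sum>d\<in>{-R..R}. G d) = G 0 + (\<Sum>d\<in>{1..R}. G d) + (\<Sum>d\<in>{1..R}. G (-d))"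
proof -
  have eq: "{-R..R} = insert 0 ({1..R} \<union> uminus ` {1..R})"
  proof (rule set_eqI)
    fix x :: int
    show "x \<in> {-R..R} \<longleftrightarrow> x \<in> insert 0 ({1..R} \<union> uminus ` {1..R})"
    proof
      assume "x \<in> {-R..R}"
      then show "x \<in> insert 0 ({1..R} \<union> uminus ` {1..R})"
        by (cases "x < 0") (auto intro!: image_eqI[where x="-x"])
    qed (use assms in auto)
  qed
  have "(\<Sum>d\<in>{-R..R}. G d) = G 0 + (\<Sum>d\<in>{1..R} \<union> uminus ` {1..R}. G d)"
    unfolding eq by (subst sum.insert) auto
  also have "(\<Sum>d\<in>{1..R} \<union> uminus ` {1..R}. G d) = (\<Sum>d\<in>{1..R}. G d) + (\<Sum>d\<in>uminus ` {1..R}. G d)"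
    by (rule sum.union_disjoint) auto
  also have "(\<Sum>d\<in>uminus ` {1..R}. G d) = (\<Sum>d\<in>{1..R}. G (-d))"
    by (subst sum.reindex) (auto simp: inj_on_def)
  finally show ?thesis by simp
qed

lemma split_edges:
  fixes G :: "int \<Rightarrow> real" and R :: int
  assumes "0 \<le> R"
  shows "(\<Sum>j\<in>{-R..<R}. G j) = (\<Sum>i\<in>{0..<R}. G i) + (\<Sum>i\<in>{0..<R}. G (-i-1))"
proof -
  have eq: "{-R..<R} = {0..<R} \<union> (\<lambda>i. -i-1) ` {0..<R}"
  proof (rule set_eqI)
    fix x :: int
    show "x \<in> {-R..<R} \<longleftrightarrow> x \<in> {0..<R} \<union> (\<lambda>i. -i-1) ` {0..<R}"
    proof
      assume "x \<in> {-R..<R}"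
      then show "x \<in> {0..<R} \<union> (\<lambda>i. -i-1) ` {0..<R}"
        by (cases "x < 0") (auto intro!: image_eqI[where x="-x-1"])
    qed (use assms in auto)
  qed
  have "(\<Sum>j\<in>{-R..<R}. G j) = (\<Sum>i\<in>{0..<R}. G i) + (\<Sum>j\<in>(\<lambda>i. -i-1) ` {0..<R}. G j)"
    unfolding eq by (rule sum.union_disjoint) auto
  also have "(\<Sum>j\<in>(\<lambda>i. -i-1) ` {0..<R}. G j) = (\<Sum>i\<in>{0..<R}. G (-i-1))"
    by (subst sum.reindex) (auto simp: inj_on_def)
  finally show ?thesis .
qed

lemma block_bound:
  fixes f :: "int \<Rightarrow> complex" and R c :: int
  assumes R: "0 \<le> R"
  shows "(\<Sum>d\<in>{-R..R}. (cmod (f (c+d) - f c))\<^sup>2)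
     \<le> (of_int R)\<^sup>2 * (\<Sum>j\<in>{-R..<R}. (cmod (f (c+j+1) - f (c+j)))\<^sup>2)"
proof -
  have h1: "(\<Sum>d\<in>{1..R}. (cmod (f (c+d) - f (c+0)))\<^sup>2) \<le> (of_int R)\<^sup>2 * (\<Sum>i\<in>{0..<R}. (cmod (f (c+(i+1)) - f (c+i)))\<^sup>2)"
    using half_bound[OF R, of "\<lambda>d. f (c+d)"] by simp
  have h2: "(\<Sum>d\<in>{1..R}. (cmod (f (c-d) - f (c-0)))\<^sup>2) \<le> (of_int R)\<^sup>2 * (\<Sum>i\<in>{0..<R}. (cmod (f (c-(i+1)) - f (c-i)))\<^sup>2)"
    using half_bound[OF R, of "\<lambda>d. f (c-d)"] by simp
  have e2: "(\<Sum>i\<in>{0..<R}. (cmod (f (c-(i+1)) - f (c-i)))\<^sup>2) = (\<Sum>i\<in>{0..<R}. (cmod (f (c+(-i-1)+1) - f (c+(-i-1))))\<^sup>2)"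
    by (rule sum.cong) (auto simp: norm_minus_commute algebra_simps)
  have "(\<Sum>d\<in>{-R..R}. (cmod (f (c+d) - f c))\<^sup>2) = (\<Sum>d\<in>{1..R}. (cmod (f (c+d) - f (c+0)))\<^sup>2) + (\<Sum>d\<in>{1..R}. (cmod (f (c-d) - f (c-0)))\<^sup>2)"
    using split_sym[OF R, of "\<lambda>d. (cmod (f (c+d) - f c))\<^sup>2"] by simp
  also have "\<dots> \<le> (of_int R)\<^sup>2 * (\<Sum>i\<in>{0..<R}. (cmod (f (c+i+1) - f (c+i)))\<^sup>2) + (of_int R)\<^sup>2 * (\<Sum>i\<in>{0..<R}. (cmod (f (c+(-i-1)+1) - f (c+(-i-1))))\<^sup>2)"
    using h1 h2 e2 by (simp add: add.assoc)
  also have "\<dots> = (of_int R)\<^sup>2 * (\<Sum>j\<in>{-R..<R}. (cmod (f (c+j+1) - f (c+j)))\<^sup>2)"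
    using split_edges[OF R, of "\<lambda>j. (cmod (f (c+j+1) - f (c+j)))\<^sup>2"] by (simp add: distrib_left)
  finally show ?thesis .
qed

lemma inj_block:
  fixes k R m m' d d' :: int
  assumes "k = 2*R+1" "0 \<le> R" "d \<in> {-R..R}" "d' \<in> {-R..R}" "k*m + d = k*m' + d'"
  shows "m = m' \<and> d = d'"
proof -
  have e: "k*(m - m') = d' - d" using assms(5) by (simp add: algebra_simps)
  have "m = m'"
  proof (rule ccontr)
    assume "m \<noteq> m'"
    then consider "m - m' \<ge> 1" | "m' - m \<ge> 1" by linarith
    then show False
    proof cases
      case 1
      then have "k*(m-m') \<ge> k*1" using assms(1,2) by (intro mult_left_mono) auto
      then show False using e assms(1,3,4) by (simp only: atLeastAtMost_iff mult_1_right mult_minus1_right) linarith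
    next
      case 2
      then have "k*(m-m') \<le> k*(-1)" using assms(1,2) by (intro mult_left_mono) auto
      then show False using e assms(1,3,4) by (simp only: atLeastAtMost_iff mult_1_right mult_minus1_right) linarith
    qed
  qed
  then show ?thesis using assms(5) by simp
qed

lemma finite_block_ineq:
  fixes f :: "int \<Rightarrow> complex" and k R :: int and s N :: real and M :: "int set"
  assumes kR: "k = 2*R+1" "0 \<le> R" and s: "0 \<le> s" and N: "0 \<le> N" and M: "finite M"
    and key: "\<And>F. finite F \<Longrightarrow> (\<Sum>j\<in>F. (cmod (f(j+1) - f j))\<^sup>2) \<le> s\<^sup>2 * N"
  defines "I \<equiv> M \<times> {-R..R}"
  defines "\<phi> \<equiv> (\<lambda>p. k * fst p + snd p)"
  shows "sqrt (\<Sum>x\<in>\<phi> ` I. (cmod (f x))\<^sup>2) \<le> sqrt k * sqrt (\<Sum>m\<in>M. (cmod (f (k*m)))\<^sup>2) + R * s * sqrt N"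
    and "sqrt k * sqrt (\<Sum>m\<in>M. (cmod (f (k*m)))\<^sup>2) \<le> sqrt (\<Sum>x\<in>\<phi> ` I. (cmod (f x))\<^sup>2) + R * s * sqrt N"
proof -
  have finI: "finite I" unfolding I_def using M by simp
  have injI: "inj_on \<phi> I"
  proof (rule inj_onI)
    fix p q assume "p \<in> I" "q \<in> I" "\<phi> p = \<phi> q"
    then show "p = q"
      using inj_block[OF kR, where m="fst p" and m'="fst q" and d="snd p" and d'="snd q"]
      unfolding I_def \<phi>_def by (simp add: mem_Times_iff prod_eq_iff)
  qed
  define L1 where "L1 = L2_set (\<lambda>p. cmod (f (\<phi> p))) I"
  define L0 where "L0 = L2_set (\<lambda>p. cmod (f (k * fst p))) I"
  define Ld where "Ld = L2_set (\<lambda>p. cmod (f (\<phi> p) - f (k * fst p))) I"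
  have t1: "L1 \<le> L0 + Ld"
  proof -
    have "L1 \<le> L2_set (\<lambda>p. cmod (f (k * fst p)) + cmod (f (\<phi> p) - f (k * fst p))) I"
      unfolding L1_def by (rule L2_set_mono) (auto intro: norm_triangle_sub)
    also have "\<dots> \<le> L0 + Ld" unfolding L0_def Ld_def by (rule L2_set_triangle_ineq)
    finally show ?thesis .
  qed
  have t2: "L0 \<le> L1 + Ld"
  proof -
    have "L0 \<le> L2_set (\<lambda>p. cmod (f (\<phi> p)) + cmod (f (\<phi> p) - f (k * fst p))) I"
      unfolding L0_def
    proof (rule L2_set_mono)
      fix p
      show "cmod (f (k * fst p)) \<le> cmod (f (\<phi> p)) + cmod (f (\<phi> p) - f (k * fst p))"
        using norm_triangle_ineq4[of "f (\<phi> p)" "f (\<phi> p) - f (k * fst p)"] by simp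
    qed auto
    also have "\<dots> \<le> L1 + Ld" unfolding L1_def Ld_def by (rule L2_set_triangle_ineq)
    finally show ?thesis .
  qed
  have L1eq: "L1 = sqrt (\<Sum>x\<in>\<phi> ` I. (cmod (f x))\<^sup>2)"
    unfolding L1_def L2_set_def by (subst sum.reindex[OF injI]) simp
  have "L0\<^sup>2 = (\<Sum>p\<in>I. (cmod (f (k * fst p)))\<^sup>2)"
    unfolding L0_def L2_set_def by (simp add: sum_nonneg)
  also have "\<dots> = (\<Sum>m\<in>M. \<Sum>d\<in>{-R..R}. (cmod (f (k * m)))\<^sup>2)"
    unfolding I_def sum.cartesian_product by (simp add: case_prod_beta)
  also have "\<dots> = k * (\<Sum>m\<in>M. (cmod (f (k*m)))\<^sup>2)"
    using kR by (simp add: sum_distrib_left)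
  finally have L0sq: "L0\<^sup>2 = k * (\<Sum>m\<in>M. (cmod (f (k*m)))\<^sup>2)" .
  have L0eq: "L0 = sqrt k * sqrt (\<Sum>m\<in>M. (cmod (f (k*m)))\<^sup>2)"
  proof -
    have "L0 = sqrt (L0\<^sup>2)" unfolding L0_def by simp
    then show ?thesis using L0sq by (simp add: real_sqrt_mult)
  qed
  define E where "E = {-R..<R}"
  define \<psi> where "\<psi> = (\<lambda>p. k * fst p + snd p)"
  have injE: "inj_on \<psi> (M \<times> E)"
  proof (rule inj_onI)
    fix p q assume "p \<in> M \<times> E" "q \<in> M \<times> E" "\<psi> p = \<psi> q"
    then show "p = q"
      using inj_block[OF kR, where m="fst p" and m'="fst q" and d="snd p" and d'="snd q"]
      unfolding E_def \<psi>_def by (simp add: mem_Times_iff prod_eq_iff)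
  qed
  have "Ld\<^sup>2 = (\<Sum>p\<in>I. (cmod (f (\<phi> p) - f (k * fst p)))\<^sup>2)"
    unfolding Ld_def L2_set_def by (simp add: sum_nonneg)
  also have "\<dots> = (\<Sum>m\<in>M. \<Sum>d\<in>{-R..R}. (cmod (f (k*m + d) - f (k * m)))\<^sup>2)"
    unfolding I_def \<phi>_def sum.cartesian_product by (simp add: case_prod_beta)
  also have "\<dots> \<le> (\<Sum>m\<in>M. (of_int R)\<^sup>2 * (\<Sum>j\<in>E. (cmod (f (k*m+j+1) - f (k*m+j)))\<^sup>2))"
    unfolding E_def by (rule sum_mono) (rule block_bound[OF kR(2)])
  also have "\<dots> = (of_int R)\<^sup>2 * (\<Sum>p\<in>M \<times> E. (cmod (f (\<psi> p + 1) - f (\<psi> p)))\<^sup>2)"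
    unfolding \<psi>_def sum_distrib_left sum.cartesian_product by (simp add: case_prod_beta add.assoc)
  finally have Ld1: "Ld\<^sup>2 \<le> (of_int R)\<^sup>2 * (\<Sum>p\<in>M \<times> E. (cmod (f (\<psi> p + 1) - f (\<psi> p)))\<^sup>2)" .
  have "(\<Sum>p\<in>M \<times> E. (cmod (f (\<psi> p + 1) - f (\<psi> p)))\<^sup>2) = (\<Sum>x\<in>\<psi> ` (M \<times> E). (cmod (f (x + 1) - f x))\<^sup>2)"
    by (subst sum.reindex[OF injE]) simp
  also have "\<dots> \<le> s\<^sup>2 * N"
    by (rule key) (use M in \<open>simp add: E_def\<close>)
  finally have X: "(\<Sum>p\<in>M \<times> E. (cmod (f (\<psi> p + 1) - f (\<psi> p)))\<^sup>2) \<le> s\<^sup>2 * N" .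
  have "Ld\<^sup>2 \<le> (of_int R)\<^sup>2 * (s\<^sup>2 * N)"
    by (rule order_trans[OF Ld1 mult_left_mono[OF X]]) simp
  moreover have "(R * s * sqrt N)\<^sup>2 = (of_int R)\<^sup>2 * (s\<^sup>2 * N)"
    by (simp only: power_mult_distrib real_sqrt_pow2[OF N] mult.assoc)
  ultimately have "Ld\<^sup>2 \<le> (R * s * sqrt N)\<^sup>2" by linarith
  moreover have "0 \<le> R * s * sqrt N"
    using kR(2) s N by simp
  ultimately have Ld: "Ld \<le> R * s * sqrt N"
    by (rule power2_le_imp_le)
  show "sqrt (\<Sum>x\<in>\<phi> ` I. (cmod (f x))\<^sup>2) \<le> sqrt k * sqrt (\<Sum>m\<in>M. (cmod (f (k*m)))\<^sup>2) + R * s * sqrt N"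
    using t1 Ld L1eq L0eq by linarith
  show "sqrt k * sqrt (\<Sum>m\<in>M. (cmod (f (k*m)))\<^sup>2) \<le> sqrt (\<Sum>x\<in>\<phi> ` I. (cmod (f x))\<^sup>2) + R * s * sqrt N"
    using t2 Ld L1eq L0eq by linarith
qed

lemma sampling:
  fixes f :: "int \<Rightarrow> complex" and k R :: int and s :: real
  assumes summ: "(\<lambda>j. (cmod (f j))\<^sup>2) summable_on UNIV"
    and kR: "k = 2*R+1" "0 \<le> R" and s: "0 \<le> s"
    and key: "\<And>F. finite F \<Longrightarrow> (\<Sum>j\<in>F. (cmod (f(j+1) - f j))\<^sup>2) \<le> s\<^sup>2 * infsum (\<lambda>j. (cmod (f j))\<^sup>2) UNIV"
  shows "sqrt (infsum (\<lambda>j. (cmod (f j))\<^sup>2) UNIV) \<le> sqrt k * sqrt (infsum (\<lambda>j. (cmod (f j))\<^sup>2) (range (\<lambda>m. k*m))) + R * s * sqrt (infsum (\<lambda>j. (cmod (f j))\<^sup>2) UNIV)"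
    and "sqrt k * sqrt (infsum (\<lambda>j. (cmod (f j))\<^sup>2) (range (\<lambda>m. k*m))) \<le> sqrt (infsum (\<lambda>j. (cmod (f j))\<^sup>2) UNIV) + R * s * sqrt (infsum (\<lambda>j. (cmod (f j))\<^sup>2) UNIV)"
proof -
  define N where "N = infsum (\<lambda>j. (cmod (f j))\<^sup>2) UNIV"
  define S where "S = range (\<lambda>m. k*m)"
  define NS where "NS = infsum (\<lambda>j. (cmod (f j))\<^sup>2) S"
  have N0: "0 \<le> N" unfolding N_def by (rule infsum_nonneg) simp
  have sumS: "(\<lambda>j. (cmod (f j))\<^sup>2) summable_on S" by (rule summable_on_subset_banach[OF summ]) simp
  have NS0: "0 \<le> NS" unfolding NS_def by (rule infsum_nonneg) simp
  have k0: "k > 0" using kR by simp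
  have keyN: "\<And>F. finite F \<Longrightarrow> (\<Sum>j\<in>F. (cmod (f(j+1) - f j))\<^sup>2) \<le> s\<^sup>2 * N"
    using key unfolding N_def .
  have sumM: "(\<Sum>m\<in>M. (cmod (f (k*m)))\<^sup>2) \<le> NS" if M: "finite M" for M
  proof -
    have inj: "inj_on (\<lambda>m. k*m) M" using k0 by (simp add: inj_on_def)
    have "(\<Sum>m\<in>M. (cmod (f (k*m)))\<^sup>2) = (\<Sum>j\<in>(\<lambda>m. k*m)`M. (cmod (f j))\<^sup>2)"
      by (simp add: sum.reindex[OF inj])
    also have "\<dots> \<le> NS" unfolding NS_def
      by (rule finite_sum_le_infsum[OF sumS]) (use M in \<open>auto simp: S_def\<close>)
    finally show ?thesis .
  qed
  have sumI: "(\<Sum>x\<in>(\<lambda>p. k*fst p + snd p)`(M \<times> {-R..R}). (cmod (f x))\<^sup>2) \<le> N" if M: "finite M" for M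
    unfolding N_def by (rule finite_sum_le_infsum[OF summ]) (use M in auto)
  have "N \<le> (sqrt k * sqrt NS + R * s * sqrt N)\<^sup>2"
    unfolding N_def[symmetric]
  proof -
    have "infsum (\<lambda>j. (cmod (f j))\<^sup>2) UNIV \<le> (sqrt k * sqrt NS + R * s * sqrt N)\<^sup>2"
    proof (rule infsum_le_finite_sums[OF summ])
      fix F :: "int set" assume F: "finite F" "F \<subseteq> UNIV"
      define M where "M = (\<lambda>j. (j+R) div k) ` F"
      have finM: "finite M" unfolding M_def using F by simp
      have sub: "F \<subseteq> (\<lambda>p. k*fst p + snd p)`(M \<times> {-R..R})"
      proof
        fix j assume j: "j \<in> F"
        have e: "j = k*((j+R) div k) + ((j+R) mod k - R)"
          using mult_div_mod_eq[of k "j+R"] by linarith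
        have m1: "0 \<le> (j+R) mod k" using k0 by simp
        have m2: "(j+R) mod k < k" using k0 by simp
        have mem: "((j+R) div k, (j+R) mod k - R) \<in> M \<times> {-R..R}"
          using j m1 m2 kR(1) unfolding M_def by auto
        show "j \<in> (\<lambda>p. k*fst p + snd p)`(M \<times> {-R..R})"
          by (rule image_eqI[OF _ mem]) (simp add: e[symmetric])
      qed
      have "(\<Sum>j\<in>F. (cmod (f j))\<^sup>2) \<le> (\<Sum>x\<in>(\<lambda>p. k*fst p + snd p)`(M \<times> {-R..R}). (cmod (f x))\<^sup>2)"
        by (rule sum_mono2[OF _ sub]) (use finM in auto)
      also have "\<dots> \<le> (sqrt k * sqrt (\<Sum>m\<in>M. (cmod (f (k*m)))\<^sup>2) + R * s * sqrt N)\<^sup>2"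
        by (rule sqrt_le_D, rule finite_block_ineq(1)[OF kR s N0 finM keyN])
      also have "\<dots> \<le> (sqrt k * sqrt NS + R * s * sqrt N)\<^sup>2"
      proof (rule power_mono)
        have "sqrt (\<Sum>m\<in>M. (cmod (f (k*m)))\<^sup>2) \<le> sqrt NS" using sumM[OF finM] by simp
        then show "sqrt k * sqrt (\<Sum>m\<in>M. (cmod (f (k*m)))\<^sup>2) + R * s * sqrt N \<le> sqrt k * sqrt NS + R * s * sqrt N"
          using k0 by (simp add: mult_left_mono)
        show "0 \<le> sqrt k * sqrt (\<Sum>m\<in>M. (cmod (f (k*m)))\<^sup>2) + R * s * sqrt N"
          using k0 kR(2) s N0 by (simp add: sum_nonneg)
      qed
      finally show "(\<Sum>j\<in>F. (cmod (f j))\<^sup>2) \<le> (sqrt k * sqrt NS + R * s * sqrt N)\<^sup>2" .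
    qed
    then show "N \<le> (sqrt k * sqrt NS + R * s * sqrt N)\<^sup>2" unfolding N_def .
  qed
  then have "sqrt N \<le> sqrt k * sqrt NS + R * s * sqrt N"
    by (rule real_le_lsqrt[rotated]) (use k0 kR(2) s N0 NS0 in simp)
  then show "sqrt (infsum (\<lambda>j. (cmod (f j))\<^sup>2) UNIV) \<le> sqrt k * sqrt (infsum (\<lambda>j. (cmod (f j))\<^sup>2) (range (\<lambda>m. k*m))) + R * s * sqrt (infsum (\<lambda>j. (cmod (f j))\<^sup>2) UNIV)"
    unfolding N_def NS_def S_def .
  define B where "B = (sqrt N + R * s * sqrt N) / sqrt k"
  have B0: "0 \<le> B" unfolding B_def using k0 kR(2) s N0 by simp
  have "NS \<le> B\<^sup>2"
    unfolding NS_def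
  proof (rule infsum_le_finite_sums[OF sumS])
    fix G :: "int set" assume G: "finite G" "G \<subseteq> S"
    define M where "M = (\<lambda>x. x div k) ` G"
    have finM: "finite M" unfolding M_def using G by simp
    have GM: "G = (\<lambda>m. k*m) ` M"
    proof (rule set_eqI)
      fix x
      show "x \<in> G \<longleftrightarrow> x \<in> (\<lambda>m. k*m) ` M"
      proof
        assume x: "x \<in> G"
        then obtain m where "x = k*m" using G(2) unfolding S_def by auto
        then have "x = k * (x div k)" using k0 by simp
        moreover have "x div k \<in> M" unfolding M_def using x by blast
        ultimately show "x \<in> (\<lambda>m. k*m) ` M" by (simp add: rev_image_eqI)
      next
        assume "x \<in> (\<lambda>m. k*m) ` M"
        then obtain y where y: "y \<in> G" "x = k * (y div k)" unfolding M_def by auto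
        obtain m where "y = k*m" using y(1) G(2) unfolding S_def by auto
        then have "k * (y div k) = y" using k0 by simp
        then show "x \<in> G" using y by simp
      qed
    qed
    have inj: "inj_on (\<lambda>m. k*m) M" using k0 by (simp add: inj_on_def)
    have sG: "(\<Sum>j\<in>G. (cmod (f j))\<^sup>2) = (\<Sum>m\<in>M. (cmod (f (k*m)))\<^sup>2)"
      unfolding GM by (simp add: sum.reindex[OF inj])
    have "sqrt k * sqrt (\<Sum>m\<in>M. (cmod (f (k*m)))\<^sup>2) \<le> sqrt N + R * s * sqrt N"
    proof -
      have "sqrt (\<Sum>x\<in>(\<lambda>p. k*fst p + snd p)`(M \<times> {-R..R}). (cmod (f x))\<^sup>2) \<le> sqrt N"
        using sumI[OF finM] by simp
      then show ?thesis using finite_block_ineq(2)[OF kR s N0 finM keyN] by linarith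
    qed
    then have "sqrt (\<Sum>m\<in>M. (cmod (f (k*m)))\<^sup>2) \<le> B"
      unfolding B_def using k0 by (simp add: field_simps)
    then have "(\<Sum>m\<in>M. (cmod (f (k*m)))\<^sup>2) \<le> B\<^sup>2" by (rule sqrt_le_D)
    then show "(\<Sum>j\<in>G. (cmod (f j))\<^sup>2) \<le> B\<^sup>2" using sG by simp
  qed
  then have "sqrt NS \<le> B" using B0 by (rule real_le_lsqrt[rotated])
  then have "sqrt k * sqrt NS \<le> sqrt N + R * s * sqrt N"
    unfolding B_def using k0 by (simp add: field_simps)
  then show "sqrt k * sqrt (infsum (\<lambda>j. (cmod (f j))\<^sup>2) (range (\<lambda>m. k*m))) \<le> sqrt (infsum (\<lambda>j. (cmod (f j))\<^sup>2) UNIV) + R * s * sqrt (infsum (\<lambda>j. (cmod (f j))\<^sup>2) UNIV)"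
    unfolding N_def NS_def S_def .
qed


definition MM :: "real measure" where "MM = restrict_space lborel {-pi..pi}"
definition ee :: "int \<Rightarrow> real \<Rightarrow> complex" where "ee j x = exp (-(\<i> * of_int j * of_real x))"
definition nrm2 :: "(real \<Rightarrow> complex) \<Rightarrow> real" where "nrm2 h = integral\<^sup>L MM (\<lambda>x. (cmod (h x))\<^sup>2)"
definition ip :: "(real \<Rightarrow> complex) \<Rightarrow> (real \<Rightarrow> complex) \<Rightarrow> complex" where
  "ip u v = integral\<^sup>L MM (\<lambda>x. u x * cnj (v x))"
definition sqi :: "(real \<Rightarrow> complex) \<Rightarrow> bool" where
  "sqi h \<longleftrightarrow> h \<in> borel_measurable MM \<and> integrable MM (\<lambda>x. (cmod (h x))\<^sup>2)"

lemma borel_measurable_cnj[measurable]: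
  "f \<in> borel_measurable M \<Longrightarrow> (\<lambda>x. cnj (f x)) \<in> borel_measurable M"
  by (rule borel_measurable_continuous_on[where f=cnj]) (auto intro: continuous_on_cnj continuous_on_id)

lemma Icc_sets: "{-pi..pi} \<inter> space lborel \<in> sets lborel" by simp

lemma space_MM[simp]: "space MM = {-pi..pi}"
  unfolding MM_def by (simp add: space_restrict_space)

lemma emeasure_MM: "emeasure MM A = emeasure lborel A" if "A \<subseteq> {-pi..pi}"
  unfolding MM_def by (rule emeasure_restrict_space[OF Icc_sets that])

lemma finite_MM: "finite_measure MM"
proof (rule finite_measureI)
  show "emeasure MM (space MM) \<noteq> \<infinity>" using emeasure_MM[of "{-pi..pi}"] by simp
qed

lemma measurable_MM[measurable (raw)]: "f \<in> borel_measurable lborel \<Longrightarrow> f \<in> borel_measurable MM"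
  unfolding MM_def by (rule measurable_restrict_space1)

lemma sqi_bdd:
  assumes "h \<in> borel_measurable MM" "\<And>x. x \<in> {-pi..pi} \<Longrightarrow> cmod (h x) \<le> B"
  shows "sqi h"
  unfolding sqi_def
proof (intro conjI assms(1) finite_measure.integrable_const_bound[OF finite_MM])
  show "AE x in MM. norm ((cmod (h x))\<^sup>2) \<le> B\<^sup>2"
    using assms(2) by (intro AE_I2) (auto intro: power_mono)
  show "(\<lambda>x. (cmod (h x))\<^sup>2) \<in> borel_measurable MM" using assms(1) by measurable
qed

lemma ee_meas[measurable]: "ee j \<in> borel_measurable MM"
  unfolding ee_def by (intro measurable_MM) measurable

lemma cmod_ee[simp]: "cmod (ee j x) = 1"
  unfolding ee_def by (simp add: norm_exp_eq_Re)

lemma sqi_ee: "sqi (ee j)"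
  by (rule sqi_bdd[where B=1]) auto

lemma sqi_meas: "sqi h \<Longrightarrow> h \<in> borel_measurable MM" unfolding sqi_def by simp
lemma sqi_int: "sqi h \<Longrightarrow> integrable MM (\<lambda>x. (cmod (h x))\<^sup>2)" unfolding sqi_def by simp

lemma int_prod:
  assumes "sqi u" "sqi v"
  shows "integrable MM (\<lambda>x. u x * cnj (v x))"
proof -
  have "integrable MM (\<lambda>x. (cmod (u x))\<^sup>2 + (cmod (v x))\<^sup>2)"
    using assms by (intro Bochner_Integration.integrable_add sqi_int)
  then show ?thesis
  proof (rule Bochner_Integration.integrable_bound)
  show "(\<lambda>x. u x * cnj (v x)) \<in> borel_measurable MM"
    using assms[THEN sqi_meas] by measurable
  show "AE x in MM. norm (u x * cnj (v x)) \<le> norm ((cmod (u x))\<^sup>2 + (cmod (v x))\<^sup>2)"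
  proof (intro AE_I2)
    fix x
    have "cmod (u x) * cmod (v x) \<le> (cmod (u x))\<^sup>2 + (cmod (v x))\<^sup>2"
      using sum_squares_bound[of "cmod (u x)" "cmod (v x)"] mult_nonneg_nonneg[OF norm_ge_zero norm_ge_zero, of "u x" "v x"]
      by linarith
    then show "norm (u x * cnj (v x)) \<le> norm ((cmod (u x))\<^sup>2 + (cmod (v x))\<^sup>2)"
      by (simp add: norm_mult)
  qed
  qed
qed

lemma int_normprod:
  assumes "sqi u" "sqi v"
  shows "integrable MM (\<lambda>x. cmod (u x) * cmod (v x))"
proof -
  have "integrable MM (\<lambda>x. cmod (u x * cnj (v x)))" using int_prod[OF assms] by simp
  then show ?thesis by (simp add: norm_mult)
qed

lemma sqi_add: assumes "sqi u" "sqi v" shows "sqi (\<lambda>x. u x + v x)"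
  unfolding sqi_def
proof
  show "(\<lambda>x. u x + v x) \<in> borel_measurable MM" using assms[THEN sqi_meas] by measurable
  have "integrable MM (\<lambda>x. 2 * (cmod (u x))\<^sup>2 + 2 * (cmod (v x))\<^sup>2)"
      using assms by (intro Bochner_Integration.integrable_add Bochner_Integration.integrable_mult_right sqi_int)
  then show "integrable MM (\<lambda>x. (cmod (u x + v x))\<^sup>2)"
  proof (rule Bochner_Integration.integrable_bound)
    show "(\<lambda>x. (cmod (u x + v x))\<^sup>2) \<in> borel_measurable MM" using assms[THEN sqi_meas] by measurable
    show "AE x in MM. norm ((cmod (u x + v x))\<^sup>2) \<le> norm (2 * (cmod (u x))\<^sup>2 + 2 * (cmod (v x))\<^sup>2)"
    proof (intro AE_I2)
      fix x
      have "(cmod (u x + v x))\<^sup>2 \<le> (cmod (u x) + cmod (v x))\<^sup>2"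
        by (intro power_mono norm_triangle_ineq) simp
      also have "\<dots> \<le> 2 * (cmod (u x))\<^sup>2 + 2 * (cmod (v x))\<^sup>2"
        using sum_squares_bound[of "cmod (u x)" "cmod (v x)"] unfolding power2_sum by linarith
      finally show "norm ((cmod (u x + v x))\<^sup>2) \<le> norm (2 * (cmod (u x))\<^sup>2 + 2 * (cmod (v x))\<^sup>2)"
        by simp
    qed
  qed
qed

lemma sqi_cmult: assumes "sqi u" shows "sqi (\<lambda>x. c * u x)"
  unfolding sqi_def
proof
  show "(\<lambda>x. c * u x) \<in> borel_measurable MM" using assms[THEN sqi_meas] by measurable
  have "integrable MM (\<lambda>x. (cmod c)\<^sup>2 * (cmod (u x))\<^sup>2)" using assms by (intro Bochner_Integration.integrable_mult_right sqi_int)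
  then show "integrable MM (\<lambda>x. (cmod (c * u x))\<^sup>2)" by (simp add: norm_mult power_mult_distrib)
qed

lemma sqi_uminus: assumes "sqi u" shows "sqi (\<lambda>x. - u x)"
  using sqi_cmult[OF assms, of "-1"] by simp

lemma sqi_diff: assumes "sqi u" "sqi v" shows "sqi (\<lambda>x. u x - v x)"
  using sqi_add[OF assms(1) sqi_uminus[OF assms(2)]] by simp

lemma sqi_zero: "sqi (\<lambda>x. 0)"
  by (rule sqi_bdd[where B=0]) auto

lemma sqi_sum: assumes "\<And>j. j \<in> A \<Longrightarrow> sqi (u j)" shows "sqi (\<lambda>x. \<Sum>j\<in>A. u j x)"
  using assms
proof (induction A rule: infinite_finite_induct)
  case (infinite A) then show ?case using sqi_zero by simp
next
  case empty then show ?case using sqi_zero by simp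
next
  case (insert a A) then show ?case by (simp add: sqi_add)
qed

lemma nrm2_nonneg: "0 \<le> nrm2 h" unfolding nrm2_def by simp

lemma ip_self: "ip u u = of_real (nrm2 u)"
proof -
  have eq: "\<And>x. u x * cnj (u x) = complex_of_real ((cmod (u x))\<^sup>2)"
    by (rule complex_norm_square[symmetric])
  have "ip u u = integral\<^sup>L MM (\<lambda>x. complex_of_real ((cmod (u x))\<^sup>2))"
    unfolding ip_def by (simp only: eq)
  also have "\<dots> = of_real (nrm2 u)" unfolding nrm2_def by (rule integral_complex_of_real)
  finally show ?thesis .
qed

lemma CS_int:
  assumes "sqi u" "sqi v"
  shows "integral\<^sup>L MM (\<lambda>x. cmod (u x) * cmod (v x)) \<le> sqrt (nrm2 u) * sqrt (nrm2 v)"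
proof -
  have mu[measurable]: "u \<in> borel_measurable MM" and mv[measurable]: "v \<in> borel_measurable MM"
    using assms by (auto dest: sqi_meas)
  have CS: "(\<integral>\<^sup>+x. ennreal (cmod (u x)) * ennreal (cmod (v x)) \<partial>MM)\<^sup>2
      \<le> (\<integral>\<^sup>+x. ennreal (cmod (u x)) ^ 2 \<partial>MM) * (\<integral>\<^sup>+x. ennreal (cmod (v x)) ^ 2 \<partial>MM)"
    by (rule Cauchy_Schwarz_nn_integral) measurable
  have e1: "(\<integral>\<^sup>+x. ennreal (cmod (u x)) * ennreal (cmod (v x)) \<partial>MM) = ennreal (integral\<^sup>L MM (\<lambda>x. cmod (u x) * cmod (v x)))"
    using nn_integral_eq_integral[OF int_normprod[OF assms]] by (simp add: ennreal_mult)
  have e2: "(\<integral>\<^sup>+x. ennreal (cmod (u x)) ^ 2 \<partial>MM) = ennreal (nrm2 u)"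
    using nn_integral_eq_integral[OF sqi_int[OF assms(1)]] unfolding nrm2_def by (simp add: ennreal_power)
  have e3: "(\<integral>\<^sup>+x. ennreal (cmod (v x)) ^ 2 \<partial>MM) = ennreal (nrm2 v)"
    using nn_integral_eq_integral[OF sqi_int[OF assms(2)]] unfolding nrm2_def by (simp add: ennreal_power)
  define I where "I = integral\<^sup>L MM (\<lambda>x. cmod (u x) * cmod (v x))"
  have I0: "0 \<le> I" unfolding I_def by simp
  have "ennreal (I\<^sup>2) \<le> ennreal (nrm2 u * nrm2 v)"
    using CS unfolding e1 e2 e3 I_def[symmetric] ennreal_power[OF I0, symmetric]
    by (simp add: ennreal_mult nrm2_nonneg)
  then have "I\<^sup>2 \<le> nrm2 u * nrm2 v"
    by (simp add: ennreal_le_iff nrm2_nonneg)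
  then have "I \<le> sqrt (nrm2 u * nrm2 v)" by (rule real_le_rsqrt)
  then show ?thesis unfolding I_def by (simp add: real_sqrt_mult)
qed

lemma CS_ip:
  assumes "sqi u" "sqi v"
  shows "cmod (ip u v) \<le> sqrt (nrm2 u) * sqrt (nrm2 v)"
proof -
  have "cmod (ip u v) \<le> integral\<^sup>L MM (\<lambda>x. norm (u x * cnj (v x)))"
    unfolding ip_def by (rule integral_norm_bound)
  also have "\<dots> = integral\<^sup>L MM (\<lambda>x. cmod (u x) * cmod (v x))" by (simp add: norm_mult)
  also have "\<dots> \<le> sqrt (nrm2 u) * sqrt (nrm2 v)" by (rule CS_int[OF assms])
  finally show ?thesis .
qed


lemma MM_integral_eq_LINT:
  fixes h :: "real \<Rightarrow> complex"
  shows "integral\<^sup>L MM h = (LINT x:{-pi..pi}|lborel. h x)"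
  unfolding MM_def set_lebesgue_integral_def by (rule integral_restrict_space[OF Icc_sets])

lemma MM_integrable_iff:
  fixes h :: "real \<Rightarrow> complex"
  shows "integrable MM h \<longleftrightarrow> set_integrable lborel {-pi..pi} h"
  unfolding MM_def set_integrable_def by (rule integrable_restrict_space[OF Icc_sets])

lemma int_MM_Henstock:
  fixes h :: "real \<Rightarrow> complex"
  assumes "integrable MM h"
  shows "integral\<^sup>L MM h = integral {-pi..pi} h"
  using set_borel_integral_eq_integral(2)[of "{-pi..pi}" h] assms
  unfolding MM_integral_eq_LINT MM_integrable_iff by simp

lemma exp_pi_sym: "exp (\<i> * of_int n * of_real pi) = exp (\<i> * of_int n * of_real (-pi))"
proof -
  have "sin (of_int n * of_real pi :: complex) = 0"
    by (simp add: sin_int_times_real mult.commute)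
  then have "exp (\<i> * (of_int n * of_real pi)) - exp (-(\<i> * (of_int n * of_real pi))) = 0"
    by (simp add: sin_exp_eq)
  then show ?thesis by (simp add: mult.assoc)
qed

lemma int_exp:
  "integral\<^sup>L MM (\<lambda>x. exp (\<i> * of_int n * of_real x)) = (if n = 0 then 2*pi else 0)"
proof (cases "n = 0")
  case True
  have "measure MM {-pi..pi} = 2*pi"
    using emeasure_MM[of "{-pi..pi}"] by (simp add: measure_def)
  then show ?thesis using True by (simp add: scaleR_conv_of_real)
next
  case False
  define F where "F = (\<lambda>x::real. exp (\<i> * of_int n * of_real x) / (\<i> * of_int n))"
  have der: "(F has_vector_derivative exp (\<i> * of_int n * of_real x)) (at x within {-pi..pi})" for x
  proof -
    have "((\<lambda>z. exp (\<i> * of_int n * z) / (\<i> * of_int n)) has_field_derivative exp (\<i> * of_int n * of_real x)) (at (of_real x))"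
      using False by (auto intro!: derivative_eq_intros simp: field_simps)
    then show ?thesis unfolding F_def by (rule has_vector_derivative_real_field)
  qed
  have "((\<lambda>x. exp (\<i> * of_int n * of_real x)) has_integral (F pi - F (-pi))) {-pi..pi}"
    by (rule fundamental_theorem_of_calculus) (auto intro: der)
  moreover have "F pi - F (-pi) = 0" unfolding F_def using exp_pi_sym[of n] by simp
  ultimately have hi: "integral {-pi..pi} (\<lambda>x. exp (\<i> * of_int n * of_real x)) = 0"
    by (simp add: integral_unique)
  have "integrable MM (\<lambda>x. exp (\<i> * of_int n * of_real x))"
  proof (rule finite_measure.integrable_const_bound[OF finite_MM, where B=1])
    show "AE x in MM. norm (exp (\<i> * of_int n * of_real x)) \<le> 1" by (simp add: norm_exp_eq_Re)
  qed measurable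
  then show ?thesis using hi False by (simp add: int_MM_Henstock)
qed

lemma cnj_mult_self: "cnj z * z = (complex_of_real (cmod z))\<^sup>2"
  by (metis complex_norm_square of_real_power mult.commute)

lemma mult_cnj_self: "z * cnj z = (complex_of_real (cmod z))\<^sup>2"
  by (metis complex_norm_square of_real_power)

lemma ee_cnj_prod: "ee j x * cnj (ee l x) = exp (\<i> * of_int (l - j) * of_real x)"
  unfolding ee_def by (simp add: exp_cnj exp_add[symmetric] algebra_simps)

lemma ip_ee: "ip (ee j) (ee l) = (if j = l then 2*pi else 0)"
  unfolding ip_def ee_cnj_prod int_exp by simp

definition tp :: "int set \<Rightarrow> (int \<Rightarrow> complex) \<Rightarrow> real \<Rightarrow> complex" where
  "tp F t x = (\<Sum>j\<in>F. t j * ee j x)"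

lemma sqi_tp: "sqi (tp F t)"
  unfolding tp_def by (intro sqi_sum sqi_cmult sqi_ee)

lemma ip_tp_right:
  assumes "sqi g" "finite F"
  shows "ip g (tp F t) = (\<Sum>j\<in>F. cnj (t j) * ip g (ee j))"
proof -
  have "ip g (tp F t) = integral\<^sup>L MM (\<lambda>x. \<Sum>j\<in>F. cnj (t j) * (g x * cnj (ee j x)))"
    unfolding ip_def tp_def by (simp add: sum_distrib_left algebra_simps)
  also have "\<dots> = (\<Sum>j\<in>F. integral\<^sup>L MM (\<lambda>x. cnj (t j) * (g x * cnj (ee j x))))"
    by (rule Bochner_Integration.integral_sum) (intro Bochner_Integration.integrable_mult_right int_prod[OF assms(1) sqi_ee])
  also have "\<dots> = (\<Sum>j\<in>F. cnj (t j) * ip g (ee j))"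
    unfolding ip_def by simp
  finally show ?thesis .
qed

lemma ip_tp_left_ee:
  assumes "finite F"
  shows "ip (tp F t) (ee l) = (if l \<in> F then of_real (2 * pi) * t l else 0)"
proof -
  have "ip (tp F t) (ee l) = integral\<^sup>L MM (\<lambda>x. \<Sum>j\<in>F. t j * (ee j x * cnj (ee l x)))"
    unfolding ip_def tp_def by (simp add: sum_distrib_left sum_distrib_right mult_ac)
  also have "\<dots> = (\<Sum>j\<in>F. integral\<^sup>L MM (\<lambda>x. t j * (ee j x * cnj (ee l x))))"
    by (rule Bochner_Integration.integral_sum) (intro Bochner_Integration.integrable_mult_right int_prod[OF sqi_ee sqi_ee])
  also have "\<dots> = (\<Sum>j\<in>F. t j * ip (ee j) (ee l))"
    unfolding ip_def by simp
  also have "\<dots> = (\<Sum>j\<in>F. if j = l then of_real (2 * pi) * t l else 0)"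
    unfolding ip_ee by (intro sum.cong) auto
  also have "\<dots> = (if l \<in> F then of_real (2 * pi) * t l else 0)"
    using assms by (simp add: sum.delta)
  finally show ?thesis .
qed

lemma nrm2_tp:
  assumes "finite F"
  shows "nrm2 (tp F t) = 2 * pi * (\<Sum>j\<in>F. (cmod (t j))\<^sup>2)"
proof -
  have "complex_of_real (nrm2 (tp F t)) = ip (tp F t) (tp F t)" by (simp add: ip_self)
  also have "\<dots> = (\<Sum>j\<in>F. cnj (t j) * ip (tp F t) (ee j))"
    by (rule ip_tp_right[OF sqi_tp assms])
  also have "\<dots> = (\<Sum>j\<in>F. complex_of_real (2 * pi * (cmod (t j))\<^sup>2))"
  proof (rule sum.cong[OF refl])
    fix j assume j: "j \<in> F"
    have "cnj (t j) * ip (tp F t) (ee j) = of_real (2*pi) * (cnj (t j) * t j)"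
      using j assms by (simp add: ip_tp_left_ee mult_ac)
    also have "\<dots> = complex_of_real (2 * pi * (cmod (t j))\<^sup>2)"
      by (simp only: cnj_mult_self of_real_mult of_real_power)
    finally show "cnj (t j) * ip (tp F t) (ee j) = complex_of_real (2 * pi * (cmod (t j))\<^sup>2)" .
  qed
  also have "\<dots> = complex_of_real (2 * pi * (\<Sum>j\<in>F. (cmod (t j))\<^sup>2))"
    by (simp add: sum_distrib_left)
  finally show ?thesis by (simp only: of_real_eq_iff)
qed

lemma ip_diff_right:
  assumes "sqi g" "sqi u" "sqi v"
  shows "ip g (\<lambda>x. u x - v x) = ip g u - ip g v"
  unfolding ip_def using int_prod[OF assms(1,2)] int_prod[OF assms(1,3)]
  by (simp add: algebra_simps)

lemma ip_add_right:
  assumes "sqi g" "sqi u" "sqi v"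
  shows "ip g (\<lambda>x. u x + v x) = ip g u + ip g v"
  unfolding ip_def using int_prod[OF assms(1,2)] int_prod[OF assms(1,3)]
  by (simp add: algebra_simps)

lemma minkowski:
  assumes "sqi u" "sqi v"
  shows "sqrt (nrm2 (\<lambda>x. u x + v x)) \<le> sqrt (nrm2 u) + sqrt (nrm2 v)"
proof -
  define w where "w = (\<lambda>x. u x + v x)"
  have sw: "sqi w" unfolding w_def by (rule sqi_add[OF assms])
  have "nrm2 w = Re (ip w w)" by (simp add: ip_self)
  also have "ip w w = ip w u + ip w v" unfolding w_def by (rule ip_add_right[OF sw[unfolded w_def] assms])
  also have "Re (ip w u + ip w v) \<le> cmod (ip w u) + cmod (ip w v)"
    by (simp add: complex_Re_le_cmod add_mono)
  also have "\<dots> \<le> sqrt (nrm2 w) * sqrt (nrm2 u) + sqrt (nrm2 w) * sqrt (nrm2 v)"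
    by (intro add_mono CS_ip sw assms)
  finally have le: "nrm2 w \<le> sqrt (nrm2 w) * (sqrt (nrm2 u) + sqrt (nrm2 v))"
    by (simp add: algebra_simps)
  show ?thesis
  proof (cases "nrm2 w = 0")
    case True then show ?thesis unfolding w_def by (simp add: nrm2_nonneg)
  next
    case False
    then have pos: "sqrt (nrm2 w) > 0" using nrm2_nonneg[of w] by simp
    have "sqrt (nrm2 w) * sqrt (nrm2 w) \<le> sqrt (nrm2 w) * (sqrt (nrm2 u) + sqrt (nrm2 v))"
      using le nrm2_nonneg[of w] by simp
    from mult_left_le_imp_le[OF this pos] show ?thesis unfolding w_def .
  qed
qed

lemma finite_CS:
  "cmod (\<Sum>j\<in>F. cnj (t j) * c j) \<le> sqrt (\<Sum>j\<in>F. (cmod (t j))\<^sup>2) * sqrt (\<Sum>j\<in>F. (cmod (c j))\<^sup>2)"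
proof -
  have "cmod (\<Sum>j\<in>F. cnj (t j) * c j) \<le> (\<Sum>j\<in>F. cmod (cnj (t j) * c j))" by (rule norm_sum)
  also have "\<dots> = (\<Sum>j\<in>F. \<bar>cmod (t j)\<bar> * \<bar>cmod (c j)\<bar>)" by (simp add: norm_mult)
  also have "\<dots> \<le> L2_set (\<lambda>j. cmod (t j)) F * L2_set (\<lambda>j. cmod (c j)) F" by (rule L2_set_mult_ineq)
  finally show ?thesis unfolding L2_set_def .
qed

lemma bessel:
  assumes "sqi h" "finite F"
  shows "(\<Sum>j\<in>F. (cmod (ip h (ee j)))\<^sup>2) \<le> 2 * pi * nrm2 h"
proof -
  define t where "t = (\<lambda>j. ip h (ee j))"
  define S where "S = (\<Sum>j\<in>F. (cmod (t j))\<^sup>2)"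
  have S0: "0 \<le> S" unfolding S_def by (simp add: sum_nonneg)
  have "ip h (tp F t) = (\<Sum>j\<in>F. cnj (t j) * t j)" unfolding t_def by (rule ip_tp_right[OF assms])
  also have "\<dots> = complex_of_real S" unfolding S_def
    by (simp add: cnj_mult_self)
  finally have e: "ip h (tp F t) = complex_of_real S" .
  have "S = cmod (ip h (tp F t))" using e S0 by simp
  also have "\<dots> \<le> sqrt (nrm2 h) * sqrt (nrm2 (tp F t))" by (rule CS_ip[OF assms(1) sqi_tp])
  also have "\<dots> = sqrt (nrm2 h) * sqrt (2 * pi) * sqrt S"
    unfolding nrm2_tp[OF assms(2)] S_def by (simp add: real_sqrt_mult)
  finally have le: "sqrt S * sqrt S \<le> sqrt (2 * pi * nrm2 h) * sqrt S"
    using S0 by (simp add: real_sqrt_mult mult_ac)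
  have "sqrt S \<le> sqrt (2 * pi * nrm2 h)"
  proof (cases "S = 0")
    case True then show ?thesis using nrm2_nonneg[of h] by simp
  next
    case False then have "sqrt S > 0" using S0 by simp
    from mult_right_le_imp_le[OF le this] show ?thesis .
  qed
  then show ?thesis unfolding S_def t_def by simp
qed


lemma parseval_ge:
  assumes g: "sqi g"
    and dens: "\<And>\<eta>. \<eta> > 0 \<Longrightarrow> \<exists>F t. finite F \<and> nrm2 (\<lambda>x. g x - tp F t x) < \<eta>"
    and summ: "(\<lambda>j. (cmod (ip g (ee j)))\<^sup>2) summable_on UNIV"
  shows "nrm2 g \<le> infsum (\<lambda>j. (cmod (ip g (ee j)))\<^sup>2) UNIV / (2*pi)"
proof -
  define G where "G = nrm2 g"
  define X where "X = infsum (\<lambda>j. (cmod (ip g (ee j)))\<^sup>2) UNIV"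
  define a where "a = sqrt (X / (2*pi))"
  have G0: "0 \<le> G" unfolding G_def by (rule nrm2_nonneg)
  have X0: "0 \<le> X" unfolding X_def by (rule infsum_nonneg) simp
  have main: "G \<le> a * sqrt G + sqrt \<delta> * (a + sqrt G)" if \<delta>: "\<delta> > 0" for \<delta>
  proof -
    obtain F t where F: "finite F" and close: "nrm2 (\<lambda>x. g x - tp F t x) < \<delta>"
      using dens[OF \<delta>] by blast
    define T where "T = tp F t"
    define d where "d = nrm2 (\<lambda>x. g x - T x)"
    have d0: "0 \<le> d" unfolding d_def by (rule nrm2_nonneg)
    have dle: "sqrt d \<le> sqrt \<delta>" unfolding d_def T_def using close by simp
    have sT: "sqi T" unfolding T_def by (rule sqi_tp)
    have sgT: "sqi (\<lambda>x. g x - T x)" by (rule sqi_diff[OF g sT])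
    have "ip g (\<lambda>x. g x - T x) = ip g g - ip g T" by (rule ip_diff_right[OF g g sT])
    then have split: "ip g g = ip g T + ip g (\<lambda>x. g x - T x)" by simp
    have "G = Re (ip g g)" unfolding G_def by (simp add: ip_self)
    also have "\<dots> \<le> cmod (ip g T) + cmod (ip g (\<lambda>x. g x - T x))"
      unfolding split by (simp add: complex_Re_le_cmod add_mono)
    also have "cmod (ip g (\<lambda>x. g x - T x)) \<le> sqrt G * sqrt d"
      unfolding G_def d_def by (rule CS_ip[OF g sgT])
    also have "cmod (ip g T) \<le> a * (sqrt G + sqrt d)"
    proof -
      have A: "cmod (ip g T) \<le> sqrt (\<Sum>j\<in>F. (cmod (t j))\<^sup>2) * sqrt (\<Sum>j\<in>F. (cmod (ip g (ee j)))\<^sup>2)"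
        unfolding T_def ip_tp_right[OF g F] by (rule finite_CS)
      have B: "sqrt (\<Sum>j\<in>F. (cmod (ip g (ee j)))\<^sup>2) \<le> sqrt X"
        unfolding X_def using finite_sum_le_infsum[OF summ F] by simp
      have C: "sqrt (\<Sum>j\<in>F. (cmod (t j))\<^sup>2) = sqrt (nrm2 T) / sqrt (2*pi)"
        unfolding T_def nrm2_tp[OF F] by (simp add: real_sqrt_mult)
      have D: "sqrt (nrm2 T) \<le> sqrt G + sqrt d"
      proof -
        have "sqrt (nrm2 (\<lambda>x. g x + (T x - g x))) \<le> sqrt (nrm2 g) + sqrt (nrm2 (\<lambda>x. T x - g x))"
          by (rule minkowski[OF g sqi_diff[OF sT g]])
        moreover have "nrm2 (\<lambda>x. T x - g x) = d"
          unfolding d_def nrm2_def by (simp add: norm_minus_commute)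
        ultimately show ?thesis unfolding G_def by simp
      qed
      have "cmod (ip g T) \<le> sqrt (\<Sum>j\<in>F. (cmod (t j))\<^sup>2) * sqrt X"
        by (rule order_trans[OF A mult_left_mono[OF B]]) (simp add: sum_nonneg)
      also have "\<dots> = sqrt (nrm2 T) * (sqrt X / sqrt (2*pi))" unfolding C by simp
      also have "\<dots> \<le> (sqrt G + sqrt d) * (sqrt X / sqrt (2*pi))"
        by (rule mult_right_mono[OF D]) (simp add: X0)
      finally show ?thesis unfolding a_def by (simp add: real_sqrt_divide mult.commute)
    qed
    finally have "G \<le> a * (sqrt G + sqrt d) + sqrt G * sqrt d" by simp
    also have "\<dots> = a * sqrt G + sqrt d * (a + sqrt G)" by (simp add: algebra_simps)
    also have "\<dots> \<le> a * sqrt G + sqrt \<delta> * (a + sqrt G)"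
      using dle X0 G0 by (intro add_left_mono mult_right_mono) (auto simp: a_def)
    finally show ?thesis .
  qed
  have Ga: "G \<le> a * sqrt G"
  proof (rule field_le_epsilon)
    fix e :: real assume e: "0 < e"
    define C where "C = a + sqrt G + 1"
    have "0 \<le> a" unfolding a_def using X0 by simp
    then have C: "C > 0" unfolding C_def using real_sqrt_ge_zero[OF G0] by linarith
    define \<delta> where "\<delta> = (e / C)\<^sup>2"
    have \<delta>: "\<delta> > 0" unfolding \<delta>_def using e C by simp
    have "G \<le> a * sqrt G + sqrt \<delta> * (a + sqrt G)" by (rule main[OF \<delta>])
    also have "sqrt \<delta> = e / C" unfolding \<delta>_def using e C by simp
    also have "e / C * (a + sqrt G) \<le> e"
    proof -
      have "a + sqrt G \<le> C" unfolding C_def by simp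
      then have "e / C * (a + sqrt G) \<le> e / C * C"
        using e C by (intro mult_left_mono) auto
      then show ?thesis using C by simp
    qed
    finally show "G \<le> a * sqrt G + e" by simp
  qed
  have "sqrt G \<le> a"
  proof (cases "G = 0")
    case True then show ?thesis unfolding a_def using X0 by simp
  next
    case False
    then have pos: "sqrt G > 0" using G0 by simp
    have "sqrt G * sqrt G \<le> a * sqrt G" using Ga G0 by simp
    from mult_right_le_imp_le[OF this pos] show ?thesis .
  qed
  then have "G \<le> a\<^sup>2" using G0 by (simp add: sqrt_le_D)
  also have "a\<^sup>2 = X / (2*pi)" unfolding a_def using X0 by simp
  finally show ?thesis unfolding G_def X_def .
qed


definition istp :: "(real \<Rightarrow> complex) \<Rightarrow> bool" where
  "istp T \<longleftrightarrow> (\<exists>F t. finite F \<and> (\<forall>x. T x = tp F t x))"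

lemma ee_0[simp]: "ee 0 x = 1" unfolding ee_def by simp

lemma ee_add: "ee a x * ee b x = ee (a + b) x"
  unfolding ee_def by (simp add: exp_add[symmetric] algebra_simps)

lemma ee_neg: "ee j (-x) = ee (-j) x"
  unfolding ee_def by simp

lemma istp_const: "istp (\<lambda>x. c)"
  unfolding istp_def tp_def by (rule exI[where x="{0}"], rule exI[where x="\<lambda>_. c"]) simp

lemma istp_ee: "istp (ee j)"
  unfolding istp_def tp_def by (rule exI[where x="{j}"], rule exI[where x="\<lambda>_. 1"]) simp

lemma istp_add:
  assumes "istp T1" "istp T2"
  shows "istp (\<lambda>x. T1 x + T2 x)"
proof -
  obtain F1 t1 where F1: "finite F1" "\<And>x. T1 x = tp F1 t1 x" using assms(1) unfolding istp_def by blast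
  obtain F2 t2 where F2: "finite F2" "\<And>x. T2 x = tp F2 t2 x" using assms(2) unfolding istp_def by blast
  define t where "t = (\<lambda>j. (if j \<in> F1 then t1 j else 0) + (if j \<in> F2 then t2 j else 0))"
  have "T1 x + T2 x = tp (F1 \<union> F2) t x" for x
  proof -
    have a: "tp F1 t1 x = (\<Sum>j\<in>F1 \<union> F2. (if j \<in> F1 then t1 j else 0) * ee j x)"
      unfolding tp_def using F1(1) F2(1) by (intro sum.mono_neutral_cong_left) auto
    have b: "tp F2 t2 x = (\<Sum>j\<in>F1 \<union> F2. (if j \<in> F2 then t2 j else 0) * ee j x)"
      unfolding tp_def using F1(1) F2(1) by (intro sum.mono_neutral_cong_left) auto
    have "T1 x + T2 x = tp F1 t1 x + tp F2 t2 x" unfolding F1(2) F2(2) ..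
    also have "\<dots> = (\<Sum>j\<in>F1 \<union> F2. (if j \<in> F1 then t1 j else 0) * ee j x + (if j \<in> F2 then t2 j else 0) * ee j x)"
      unfolding a b by (rule sum.distrib[symmetric])
    also have "\<dots> = tp (F1 \<union> F2) t x"
      unfolding tp_def t_def by (simp add: distrib_right)
    finally show ?thesis .
  qed
  then show ?thesis unfolding istp_def using F1(1) F2(1) by blast
qed

lemma istp_cmult:
  assumes "istp T"
  shows "istp (\<lambda>x. c * T x)"
proof -
  obtain F t where F: "finite F" "\<And>x. T x = tp F t x" using assms unfolding istp_def by blast
  have "c * T x = tp F (\<lambda>j. c * t j) x" for x
    unfolding F(2) tp_def by (simp add: sum_distrib_left mult.assoc)
  then show ?thesis unfolding istp_def using F(1) by blast
qed

lemma istp_mult: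
  assumes "istp T1" "istp T2"
  shows "istp (\<lambda>x. T1 x * T2 x)"
proof -
  obtain F1 t1 where F1: "finite F1" "\<And>x. T1 x = tp F1 t1 x" using assms(1) unfolding istp_def by blast
  obtain F2 t2 where F2: "finite F2" "\<And>x. T2 x = tp F2 t2 x" using assms(2) unfolding istp_def by blast
  define S where "S = F1 \<times> F2"
  define h where "h = (\<lambda>p::int\<times>int. fst p + snd p)"
  define F where "F = h ` S"
  define t where "t = (\<lambda>n. \<Sum>p\<in>{p. p \<in> S \<and> h p = n}. t1 (fst p) * t2 (snd p))"
  have finS: "finite S" unfolding S_def using F1(1) F2(1) by simp
  have finF: "finite F" unfolding F_def using finS by simp
  have "T1 x * T2 x = tp F t x" for x
  proof -
    have "T1 x * T2 x = (\<Sum>p\<in>S. t1 (fst p) * t2 (snd p) * ee (h p) x)"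
      unfolding F1(2) F2(2) tp_def S_def h_def sum_product sum.cartesian_product
      by (intro sum.cong) (auto simp: ee_add[symmetric] mult_ac)
    also have "\<dots> = (\<Sum>n\<in>F. \<Sum>p\<in>{p. p \<in> S \<and> h p = n}. t1 (fst p) * t2 (snd p) * ee (h p) x)"
      by (rule sum.group[symmetric]) (use finS finF in \<open>auto simp: F_def\<close>)
    also have "\<dots> = (\<Sum>n\<in>F. t n * ee n x)"
      unfolding t_def sum_distrib_right by (intro sum.cong refl) auto
    finally show ?thesis unfolding tp_def .
  qed
  then show ?thesis unfolding istp_def using finF by blast
qed

lemma istp_cos: "istp (\<lambda>x. complex_of_real (cos x))"
proof -
  have "complex_of_real (cos x) = (1/2) * ee (-1) x + (1/2) * ee 1 x" for x
    unfolding ee_def cos_of_real[symmetric] cos_exp_eq by (simp add: field_simps)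
  then show ?thesis
    using istp_add[OF istp_cmult[OF istp_ee] istp_cmult[OF istp_ee], of "1/2" "-1" "1/2" 1] by simp
qed

lemma istp_sin: "istp (\<lambda>x. complex_of_real (sin x))"
proof -
  have "complex_of_real (sin x) = (1/(2*\<i>)) * ee (-1) x + (-1/(2*\<i>)) * ee 1 x" for x
    unfolding ee_def sin_of_real[symmetric] sin_exp_eq by (simp add: field_simps)
  then show ?thesis
    using istp_add[OF istp_cmult[OF istp_ee] istp_cmult[OF istp_ee], of "1/(2*\<i>)" "-1" "-1/(2*\<i>)" 1] by simp
qed

lemma istp_reflect:
  assumes "istp T"
  shows "istp (\<lambda>x. T (-x))"
proof -
  obtain F t where F: "finite F" "\<And>x. T x = tp F t x" using assms unfolding istp_def by blast
  have "T (-x) = tp (uminus ` F) (\<lambda>j. t (-j)) x" for x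
    unfolding F(2) tp_def ee_neg by (subst sum.reindex) (auto simp: inj_on_def)
  then show ?thesis unfolding istp_def using F(1) by blast
qed

lemma istp_poly:
  assumes "real_polynomial_function p"
  shows "istp (\<lambda>x. complex_of_real (p (cos x)))"
  using assms
proof (induction p rule: real_polynomial_function.induct)
  case (linear f)
  have fy: "f (cos x) = cos x * f 1" for x
    using linear_scale_real[OF bounded_linear.linear[OF linear], of "cos x" 1] by simp
  have "\<And>x. complex_of_real (f (cos x)) = complex_of_real (f 1) * complex_of_real (cos x)"
    unfolding fy by (simp add: mult.commute)
  then show ?case using istp_cmult[OF istp_cos] by simp
next
  case (const c)
  then show ?case using istp_const by simp
next
  case (add f g)
  then show ?case using istp_add[OF add.IH] by simp
next
  case (mult f g)
  then show ?case using istp_mult[OF mult.IH] by simp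
qed


lemma sin_ge_on:
  assumes "0 < d" "d \<le> t" "t \<le> pi - d"
  shows "sin d \<le> sin t"
proof (cases "t \<le> pi/2")
  case True
  then show ?thesis using assms by (intro sin_monotone_2pi_le) auto
next
  case False
  have "sin d \<le> sin (pi - t)" using assms False by (intro sin_monotone_2pi_le) auto
  then show ?thesis by simp
qed

lemma unif_pos:
  fixes \<phi> :: "real \<Rightarrow> real"
  assumes cont: "continuous_on UNIV \<phi>" and d: "0 < d"
    and supp: "\<And>x. \<phi> x \<noteq> 0 \<Longrightarrow> x \<in> {d..pi-d}" and e: "0 < e"
  shows "\<exists>T. istp T \<and> (\<forall>x\<in>{-pi..pi}. cmod (complex_of_real (\<phi> x) - T x) \<le> e)"
proof (cases "d \<le> pi/2")
  case False
  then have "\<phi> x = 0" for x using supp[of x] by force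
  then show ?thesis using istp_const[of 0] e by auto
next
  case True
  have sd: "0 < sin d" using d True by (intro sin_gt_zero) auto
  define \<alpha> where "\<alpha> = (\<lambda>y. \<phi> (arccos y))"
  define \<beta> where "\<beta> = (\<lambda>y. \<phi> (arccos y) / max (sqrt (1 - y\<^sup>2)) (sin d))"
  have ca: "continuous_on {-1..1} \<alpha>"
    unfolding \<alpha>_def by (rule continuous_on_compose2[OF cont continuous_on_arccos']) auto
  have cb: "continuous_on {-1..1} \<beta>"
    unfolding \<beta>_def
  proof (rule continuous_on_divide)
    show "continuous_on {-1..1} (\<lambda>y. \<phi> (arccos y))" using ca unfolding \<alpha>_def .
    show "continuous_on {-1..1} (\<lambda>y. max (sqrt (1 - y\<^sup>2)) (sin d))"
      by (intro continuous_intros)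
    show "\<forall>y\<in>{-1..1}. max (sqrt (1 - y\<^sup>2)) (sin d) \<noteq> 0" using sd by auto
  qed
  obtain p where p: "real_polynomial_function p" "\<And>y. y \<in> {-1..1} \<Longrightarrow> \<bar>\<alpha> y - p y\<bar> < e"
    using Stone_Weierstrass_real_polynomial_function[OF compact_Icc ca e] by blast
  obtain q where q: "real_polynomial_function q" "\<And>y. y \<in> {-1..1} \<Longrightarrow> \<bar>\<beta> y - q y\<bar> < e"
    using Stone_Weierstrass_real_polynomial_function[OF compact_Icc cb e] by blast
  define T where "T = (\<lambda>x. (1/2) * (complex_of_real (p (cos x)) + complex_of_real (sin x) * complex_of_real (q (cos x))))"
  have iT: "istp T"
    unfolding T_def by (intro istp_cmult istp_add istp_mult istp_sin istp_poly p(1) q(1))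
  have claim: "\<phi> x = (\<alpha> (cos x) + sin x * \<beta> (cos x)) / 2" if x: "x \<in> {-pi..pi}" for x
  proof -
    have ac: "arccos (cos x) = \<bar>x\<bar>"
    proof -
      have "arccos (cos \<bar>x\<bar>) = \<bar>x\<bar>" using x by (intro arccos_cos) auto
      then show ?thesis by simp
    qed
    have sq: "sqrt (1 - (cos x)\<^sup>2) = sin \<bar>x\<bar>"
      using sin_arccos[of "cos x"] ac by simp
    show ?thesis
    proof (cases "0 \<le> x")
      case True
      then have ax: "\<bar>x\<bar> = x" by simp
      show ?thesis
      proof (cases "\<phi> x = 0")
        case True
        then show ?thesis unfolding \<alpha>_def \<beta>_def ac ax by simp
      next
        case False
        then have xs: "x \<in> {d..pi-d}" by (rule supp)
        then have "sin d \<le> sin x" using d by (intro sin_ge_on) auto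
        then have m: "max (sqrt (1 - (cos x)\<^sup>2)) (sin d) = sin x" unfolding sq ax by simp
        have "sin x > 0" using sd \<open>sin d \<le> sin x\<close> by simp
        then show ?thesis unfolding \<alpha>_def \<beta>_def m ac ax by simp
      qed
    next
      case False
      then have ax: "\<bar>x\<bar> = -x" by simp
      have px: "\<phi> x = 0" using supp[of x] False d by force
      show ?thesis
      proof (cases "\<phi> (-x) = 0")
        case True
        then show ?thesis unfolding \<alpha>_def \<beta>_def ac ax px by simp
      next
        case False
        then have xs: "-x \<in> {d..pi-d}" by (rule supp)
        then have "sin d \<le> sin (-x)" using d by (intro sin_ge_on) auto
        then have m: "max (sqrt (1 - (cos x)\<^sup>2)) (sin d) = - sin x" unfolding sq ax by simp
        have "sin x < 0" using sd \<open>sin d \<le> sin (-x)\<close> by simp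
        then show ?thesis unfolding \<alpha>_def \<beta>_def m ac ax px by simp
      qed
    qed
  qed
  have "cmod (complex_of_real (\<phi> x) - T x) \<le> e" if x: "x \<in> {-pi..pi}" for x
  proof -
    have cx: "cos x \<in> {-1..1}" by simp
    have "complex_of_real (\<phi> x) - T x = complex_of_real ((\<alpha> (cos x) - p (cos x)) / 2 + sin x * (\<beta> (cos x) - q (cos x)) / 2)"
      unfolding T_def claim[OF x] by (simp add: field_simps)
    then have "cmod (complex_of_real (\<phi> x) - T x) = \<bar>(\<alpha> (cos x) - p (cos x)) / 2 + sin x * (\<beta> (cos x) - q (cos x)) / 2\<bar>"
      by (simp only: norm_of_real)
    also have "\<dots> \<le> \<bar>\<alpha> (cos x) - p (cos x)\<bar> / 2 + \<bar>sin x\<bar> * \<bar>\<beta> (cos x) - q (cos x)\<bar> / 2"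
      by (rule order_trans[OF abs_triangle_ineq]) (simp add: abs_mult)
    also have "\<dots> \<le> e / 2 + 1 * e / 2"
    proof (intro add_mono divide_right_mono mult_mono)
      show "\<bar>\<alpha> (cos x) - p (cos x)\<bar> \<le> e" using p(2)[OF cx] by simp
      show "\<bar>\<beta> (cos x) - q (cos x)\<bar> \<le> e" using q(2)[OF cx] by simp
    qed (auto simp: abs_sin_le_one)
    finally show ?thesis by simp
  qed
  then show ?thesis using iT by blast
qed

lemma unif_neg:
  fixes \<phi> :: "real \<Rightarrow> real"
  assumes cont: "continuous_on UNIV \<phi>" and d: "0 < d"
    and supp: "\<And>x. \<phi> x \<noteq> 0 \<Longrightarrow> x \<in> {-(pi-d)..-d}" and e: "0 < e"
  shows "\<exists>T. istp T \<and> (\<forall>x\<in>{-pi..pi}. cmod (complex_of_real (\<phi> x) - T x) \<le> e)"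
proof -
  have c2: "continuous_on UNIV (\<lambda>x. \<phi> (-x))"
    by (rule continuous_on_compose2[OF cont]) (auto intro: continuous_intros)
  have s2: "\<phi> (-x) \<noteq> 0 \<Longrightarrow> x \<in> {d..pi-d}" for x using supp[of "-x"] by auto
  obtain T where T: "istp T" "\<And>x. x \<in> {-pi..pi} \<Longrightarrow> cmod (complex_of_real (\<phi> (-x)) - T x) \<le> e"
    using unif_pos[OF c2 d s2 e] by blast
  have "cmod (complex_of_real (\<phi> x) - T (-x)) \<le> e" if "x \<in> {-pi..pi}" for x
    using T(2)[of "-x"] that by simp
  then show ?thesis using istp_reflect[OF T(1)] by blast
qed


definition appr :: "(real \<Rightarrow> complex) \<Rightarrow> bool" where
  "appr h \<longleftrightarrow> (\<forall>\<eta>>0. \<exists>T. istp T \<and> nrm2 (\<lambda>x. h x - T x) < \<eta>)"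

lemma istp_eq: "istp T \<Longrightarrow> \<exists>F t. finite F \<and> T = tp F t"
  unfolding istp_def by blast

lemma sqi_istp: "istp T \<Longrightarrow> sqi T"
  using istp_eq sqi_tp by blast

lemma measure_MM_space: "measure MM {-pi..pi} = 2 * pi"
  using emeasure_MM[of "{-pi..pi}"] by (simp add: measure_def)

lemma nrm2_cong: "(\<And>x. x \<in> {-pi..pi} \<Longrightarrow> h x = h' x) \<Longrightarrow> nrm2 h = nrm2 h'"
  unfolding nrm2_def by (rule Bochner_Integration.integral_cong) auto

lemma appr_cong:
  assumes "\<And>x. x \<in> {-pi..pi} \<Longrightarrow> h x = h' x" "appr h'"
  shows "appr h"
  unfolding appr_def
proof (intro allI impI)
  fix \<eta> :: real assume "\<eta> > 0"
  then obtain T where "istp T" "nrm2 (\<lambda>x. h' x - T x) < \<eta>" using assms(2) unfolding appr_def by blast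
  moreover have "nrm2 (\<lambda>x. h x - T x) = nrm2 (\<lambda>x. h' x - T x)"
    by (rule nrm2_cong) (simp add: assms(1))
  ultimately show "\<exists>T. istp T \<and> nrm2 (\<lambda>x. h x - T x) < \<eta>" by auto
qed

lemma sqrt_sum_lt:
  assumes "0 \<le> a" "0 \<le> b" "a < \<eta>/4" "b < \<eta>/4" "sqrt c \<le> sqrt a + sqrt b"
  shows "c < \<eta>"
proof -
  have "sqrt a < sqrt (\<eta>/4)" "sqrt b < sqrt (\<eta>/4)" using assms by auto
  then have "sqrt c < 2 * sqrt (\<eta>/4)" using assms(5) by linarith
  also have "2 * sqrt (\<eta>/4) = sqrt \<eta>"
    by (simp add: real_sqrt_divide)
  finally show ?thesis by simp
qed

lemma appr_add:
  assumes "sqi h1" "sqi h2" "appr h1" "appr h2"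
  shows "appr (\<lambda>x. h1 x + h2 x)"
  unfolding appr_def
proof (intro allI impI)
  fix \<eta> :: real assume \<eta>: "\<eta> > 0"
  obtain T1 where T1: "istp T1" "nrm2 (\<lambda>x. h1 x - T1 x) < \<eta>/4" using assms(3) \<eta> unfolding appr_def
    by (meson divide_pos_pos zero_less_numeral)
  obtain T2 where T2: "istp T2" "nrm2 (\<lambda>x. h2 x - T2 x) < \<eta>/4" using assms(4) \<eta> unfolding appr_def
    by (meson divide_pos_pos zero_less_numeral)
  have eq: "(\<lambda>x. h1 x + h2 x - (T1 x + T2 x)) = (\<lambda>x. (h1 x - T1 x) + (h2 x - T2 x))" by (simp add: algebra_simps)
  have "sqrt (nrm2 (\<lambda>x. (h1 x - T1 x) + (h2 x - T2 x))) \<le> sqrt (nrm2 (\<lambda>x. h1 x - T1 x)) + sqrt (nrm2 (\<lambda>x. h2 x - T2 x))"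
    by (rule minkowski) (intro sqi_diff assms sqi_istp T1 T2)+
  then have "nrm2 (\<lambda>x. h1 x + h2 x - (T1 x + T2 x)) < \<eta>"
    unfolding eq by (rule sqrt_sum_lt[OF nrm2_nonneg nrm2_nonneg T1(2) T2(2)])
  then show "\<exists>T. istp T \<and> nrm2 (\<lambda>x. h1 x + h2 x - T x) < \<eta>" using istp_add[OF T1(1) T2(1)] by blast
qed

lemma appr_zero: "appr (\<lambda>x. 0)"
  unfolding appr_def using istp_const[of 0] by (auto simp: nrm2_def)

lemma appr_cmult:
  assumes "appr h"
  shows "appr (\<lambda>x. c * h x)"
proof (cases "c = 0")
  case True then show ?thesis using appr_zero by simp
next
  case False
  show ?thesis unfolding appr_def
  proof (intro allI impI)
    fix \<eta> :: real assume \<eta>: "\<eta> > 0"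
    have "\<eta> / (cmod c)\<^sup>2 > 0" using \<eta> False by simp
    then obtain T where T: "istp T" "nrm2 (\<lambda>x. h x - T x) < \<eta> / (cmod c)\<^sup>2"
      using assms unfolding appr_def by blast
    have "nrm2 (\<lambda>x. c * h x - c * T x) = (cmod c)\<^sup>2 * nrm2 (\<lambda>x. h x - T x)"
      unfolding nrm2_def by (simp add: right_diff_distrib[symmetric] norm_mult power_mult_distrib)
    also have "\<dots> < \<eta>" using T(2) False by (simp add: field_simps)
    finally show "\<exists>T. istp T \<and> nrm2 (\<lambda>x. c * h x - T x) < \<eta>"
      using istp_cmult[OF T(1), of c] by blast
  qed
qed

lemma appr_limit:
  assumes "sqi h" "\<And>\<eta>. \<eta> > 0 \<Longrightarrow> \<exists>h'. sqi h' \<and> appr h' \<and> nrm2 (\<lambda>x. h x - h' x) < \<eta>"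
  shows "appr h"
  unfolding appr_def
proof (intro allI impI)
  fix \<eta> :: real assume \<eta>: "\<eta> > 0"
  then have \<eta>4: "\<eta>/4 > 0" by simp
  obtain h' where h': "sqi h'" "appr h'" "nrm2 (\<lambda>x. h x - h' x) < \<eta>/4" using assms(2)[OF \<eta>4] by blast
  obtain T where T: "istp T" "nrm2 (\<lambda>x. h' x - T x) < \<eta>/4" using h'(2) \<eta>4 unfolding appr_def by blast
  have eq: "(\<lambda>x. h x - T x) = (\<lambda>x. (h x - h' x) + (h' x - T x))" by simp
  have "sqrt (nrm2 (\<lambda>x. (h x - h' x) + (h' x - T x))) \<le> sqrt (nrm2 (\<lambda>x. h x - h' x)) + sqrt (nrm2 (\<lambda>x. h' x - T x))"
    by (rule minkowski) (intro sqi_diff assms h' sqi_istp T)+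
  then have "nrm2 (\<lambda>x. h x - T x) < \<eta>"
    unfolding eq by (rule sqrt_sum_lt[OF nrm2_nonneg nrm2_nonneg h'(3) T(2)])
  then show "\<exists>T. istp T \<and> nrm2 (\<lambda>x. h x - T x) < \<eta>" using T(1) by blast
qed

lemma appr_unif:
  assumes hm: "h \<in> borel_measurable MM"
    and U: "\<And>e. e > 0 \<Longrightarrow> \<exists>T. istp T \<and> (\<forall>x\<in>{-pi..pi}. cmod (h x - T x) \<le> e)"
  shows "appr h"
  unfolding appr_def
proof (intro allI impI)
  fix \<eta> :: real assume \<eta>: "\<eta> > 0"
  define e where "e = sqrt (\<eta> / (4*pi))"
  have e: "e > 0" unfolding e_def using \<eta> by simp
  obtain T where T: "istp T" "\<And>x. x \<in> {-pi..pi} \<Longrightarrow> cmod (h x - T x) \<le> e" using U[OF e] by blast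
  have sd: "sqi (\<lambda>x. h x - T x)"
  proof (rule sqi_bdd)
    show "(\<lambda>x. h x - T x) \<in> borel_measurable MM"
      using hm sqi_meas[OF sqi_istp[OF T(1)]] by measurable
    show "\<And>x. x \<in> {-pi..pi} \<Longrightarrow> cmod (h x - T x) \<le> e" by (rule T(2))
  qed
  have "nrm2 (\<lambda>x. h x - T x) \<le> integral\<^sup>L MM (\<lambda>x. e\<^sup>2)"
    unfolding nrm2_def
  proof (rule integral_mono)
    show "integrable MM (\<lambda>x. (cmod (h x - T x))\<^sup>2)" using sd by (rule sqi_int)
    show "integrable MM (\<lambda>x. e\<^sup>2)" by (rule finite_measure.integrable_const[OF finite_MM])
    show "\<And>x. x \<in> space MM \<Longrightarrow> (cmod (h x - T x))\<^sup>2 \<le> e\<^sup>2"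
      using T(2) by (auto intro: power_mono)
  qed
  also have "\<dots> = 2 * pi * e\<^sup>2" using measure_MM_space by simp
  also have "\<dots> = \<eta> / 2" unfolding e_def using \<eta> by simp
  also have "\<dots> < \<eta>" using \<eta> by simp
  finally show "\<exists>T. istp T \<and> nrm2 (\<lambda>x. h x - T x) < \<eta>" using T(1) by blast
qed


lemma cont_meas:
  assumes "continuous_on UNIV (\<phi>::real\<Rightarrow>real)"
  shows "(\<lambda>x. complex_of_real (\<phi> x)) \<in> borel_measurable MM"
proof -
  have "\<phi> \<in> borel_measurable borel" by (rule borel_measurable_continuous_onI[OF assms])
  then have "(\<lambda>x. complex_of_real (\<phi> x)) \<in> borel_measurable borel" by measurable
  then show ?thesis by (intro measurable_MM) simp
qed

lemma appr_cont:
  assumes c: "continuous_on UNIV (\<phi>::real\<Rightarrow>real)" and d: "0 < d"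
    and supp: "(\<forall>x. \<phi> x \<noteq> 0 \<longrightarrow> x \<in> {d..pi-d}) \<or> (\<forall>x. \<phi> x \<noteq> 0 \<longrightarrow> x \<in> {-(pi-d)..-d})"
  shows "appr (\<lambda>x. complex_of_real (\<phi> x))"
proof (rule appr_unif[OF cont_meas[OF c]])
  fix e :: real assume e: "e > 0"
  from supp show "\<exists>T. istp T \<and> (\<forall>x\<in>{-pi..pi}. cmod (complex_of_real (\<phi> x) - T x) \<le> e)"
  proof
    assume "\<forall>x. \<phi> x \<noteq> 0 \<longrightarrow> x \<in> {d..pi-d}"
    then show ?thesis using unif_pos[OF c d _ e] by blast
  next
    assume "\<forall>x. \<phi> x \<noteq> 0 \<longrightarrow> x \<in> {-(pi-d)..-d}"
    then show ?thesis using unif_neg[OF c d _ e] by blast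
  qed
qed

lemma sqi_indicator:
  assumes "A \<in> sets borel"
  shows "sqi (indicator A :: real \<Rightarrow> complex)"
proof (rule sqi_bdd[where B=1])
  have "(indicator A :: real \<Rightarrow> complex) \<in> borel_measurable lborel"
    using assms by (intro borel_measurable_indicator) simp
  then show "(indicator A :: real \<Rightarrow> complex) \<in> borel_measurable MM" by (rule measurable_MM)
qed (simp add: indicator_def)

lemma int_ind:
  assumes "X \<in> sets borel"
  shows "integrable MM (indicator X :: real \<Rightarrow> real)"
proof (rule finite_measure.integrable_const_bound[OF finite_MM, where B=1])
  have "(indicator X :: real \<Rightarrow> real) \<in> borel_measurable lborel"
    using assms by (intro borel_measurable_indicator) simp
  then show "(indicator X :: real \<Rightarrow> real) \<in> borel_measurable MM" by (rule measurable_MM)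
qed (simp add: indicator_def)

lemma measure_MM_borel:
  assumes "X \<in> sets borel" "X \<subseteq> {-pi..pi}"
  shows "measure MM X = measure lebesgue X"
proof -
  have "measure MM X = measure lborel X"
    unfolding MM_def using assms by (intro measure_restrict_space[OF Icc_sets])
  also have "\<dots> = measure lebesgue X" using assms by simp
  finally show ?thesis .
qed

lemma appr_ind_int:
  fixes A :: "real set" and a b :: real
  assumes A: "A \<in> sets borel" and ab: "(a = 0 \<and> b = pi) \<or> (a = -pi \<and> b = 0)" and sub: "A \<subseteq> {a<..<b}"
  shows "appr (indicator A)"
proof (rule appr_limit[OF sqi_indicator[OF A]])
  fix \<eta> :: real assume \<eta>: "\<eta> > 0"
  define e where "e = \<eta> / 4"
  have e: "e > 0" unfolding e_def using \<eta> by simp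
  have bma: "b - a = pi" using ab by auto
  have abpi: "{a<..<b} \<subseteq> {-pi..pi}" using ab by auto
  have Al: "A \<in> sets lebesgue" using A by simp
  obtain C where C: "closed C" "C \<subseteq> A" "A - C \<in> lmeasurable" "emeasure lebesgue (A - C) < ennreal e"
    using sets_lebesgue_inner_closed[OF Al e] by blast
  obtain U where U: "open U" "A \<subseteq> U" "U - A \<in> lmeasurable" "emeasure lebesgue (U - A) < ennreal e"
    using sets_lebesgue_outer_open[OF Al e] by blast
  obtain \<delta> where \<delta>: "\<delta> > 0" "C \<subseteq> {a+\<delta>..b-\<delta>}"
  proof (cases "C = {}")
    case True
    show ?thesis by (rule that[of "pi/4"]) (use True in auto)
  next
    case False
    have "bounded C" using C(2) sub by (intro bounded_subset[OF bounded_closed_interval[of a b]]) auto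
    then have cC: "compact C" using C(1) by (simp add: compact_eq_bounded_closed)
    obtain lo where lo: "lo \<in> C" "\<And>y. y \<in> C \<Longrightarrow> lo \<le> y" using compact_attains_inf[OF cC False] by blast
    obtain hi where hi: "hi \<in> C" "\<And>y. y \<in> C \<Longrightarrow> y \<le> hi" using compact_attains_sup[OF cC False] by blast
    have "a < lo" "hi < b" using lo(1) hi(1) C(2) sub by auto
    moreover have "C \<subseteq> {a + min (lo - a) (b - hi)..b - min (lo - a) (b - hi)}"
    proof
      fix x assume x: "x \<in> C"
      have "lo \<le> x" "x \<le> hi" using lo(2)[OF x] hi(2)[OF x] by auto
      then show "x \<in> {a + min (lo - a) (b - hi)..b - min (lo - a) (b - hi)}" by auto
    qed
    ultimately show ?thesis by (intro that[of "min (lo - a) (b - hi)"]) auto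
  qed
  define U' where "U' = U \<inter> {a+\<delta>/2<..<b-\<delta>/2}"
  have oU': "open U'" unfolding U'_def using U(1) by auto
  have CU': "C \<subseteq> U'" unfolding U'_def using \<delta> C(2) U(2) by auto
  have cl1: "closedin (top_of_set UNIV) (- U')"
    using oU' by (simp add: closed_closedin[symmetric] closed_Compl)
  have cl2: "closedin (top_of_set UNIV) C"
    using C(1) by (simp add: closed_closedin[symmetric])
  obtain \<phi> :: "real \<Rightarrow> real" where
    \<phi>c: "continuous_on UNIV \<phi>" and \<phi>r: "\<And>x. \<phi> x \<in> closed_segment 0 1"
    and \<phi>0: "\<And>x. x \<in> - U' \<Longrightarrow> \<phi> x = 0" and \<phi>1: "\<And>x. x \<in> C \<Longrightarrow> \<phi> x = 1"
    using Urysohn_local[OF cl1 cl2, of 0 1] CU' by auto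
  have \<phi>b: "0 \<le> \<phi> x" "\<phi> x \<le> 1" for x using \<phi>r[of x] by (auto simp: closed_segment_eq_real_ivl)
  have supp: "\<phi> x \<noteq> 0 \<Longrightarrow> x \<in> {a+\<delta>/2..b-\<delta>/2}" for x
  proof -
    assume "\<phi> x \<noteq> 0"
    then have "x \<in> U'" using \<phi>0[of x] by blast
    then show ?thesis unfolding U'_def by simp
  qed
  have suppd: "(\<forall>x. \<phi> x \<noteq> 0 \<longrightarrow> x \<in> {\<delta>/2..pi-\<delta>/2}) \<or> (\<forall>x. \<phi> x \<noteq> 0 \<longrightarrow> x \<in> {-(pi-\<delta>/2)..-(\<delta>/2)})"
    using ab supp by auto
  have ap: "appr (\<lambda>x. complex_of_real (\<phi> x))"
    by (rule appr_cont[OF \<phi>c _ suppd]) (use \<delta> in simp)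
  have sp: "sqi (\<lambda>x. complex_of_real (\<phi> x))"
    by (rule sqi_bdd[OF cont_meas[OF \<phi>c], where B=1]) (use \<phi>b in auto)
  have bA: "(A - C) \<in> sets borel" using A C(1) by auto
  have bU: "(U' - A) \<in> sets borel" using A oU' by auto
  have sAC: "A - C \<subseteq> {-pi..pi}" using sub abpi by auto
  have sUA: "U' - A \<subseteq> {-pi..pi}"
  proof -
    have "U' \<subseteq> {a<..<b}" unfolding U'_def using \<delta> by auto
    then show ?thesis using abpi by auto
  qed
  have pw: "(cmod (indicator A x - complex_of_real (\<phi> x)))\<^sup>2 \<le> indicator (A - C) x + indicator (U' - A) x" for x
  proof (cases "x \<in> A")
    case True
    show ?thesis
    proof (cases "x \<in> C")
      case True then show ?thesis using \<phi>1[of x] \<open>x\<in>A\<close> by simp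
    next
      case False
      have "(cmod (1 - complex_of_real (\<phi> x)))\<^sup>2 = (1 - \<phi> x)\<^sup>2"
        by (metis norm_of_real of_real_1 of_real_diff real_norm_def power2_abs)
      also have "\<dots> \<le> 1" using \<phi>b[of x] by (simp add: power_le_one)
      finally show ?thesis using True False by simp
    qed
  next
    case False
    show ?thesis
    proof (cases "x \<in> U'")
      case True
      have "(cmod (complex_of_real (\<phi> x)))\<^sup>2 \<le> 1" using \<phi>b[of x] by (simp add: power_le_one)
      then show ?thesis using True False by simp
    next
      case False
      then show ?thesis using \<phi>0[of x] \<open>x \<notin> A\<close> by simp
    qed
  qed
  have mAC: "measure lebesgue (A - C) < e"
  proof -
    have "ennreal (measure lebesgue (A - C)) < ennreal e" using C(3,4) by (simp add: emeasure_eq_measure2)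
    then show ?thesis by (simp add: ennreal_less_iff)
  qed
  have mUA: "measure lebesgue (U' - A) < e"
  proof -
    have "measure lebesgue (U' - A) \<le> measure lebesgue (U - A)"
      by (rule measure_mono_fmeasurable) (use U(3) bU in \<open>auto simp: U'_def\<close>)
    moreover have "ennreal (measure lebesgue (U - A)) < ennreal e" using U(3,4) by (simp add: emeasure_eq_measure2)
    then have "measure lebesgue (U - A) < e" by (simp add: ennreal_less_iff)
    ultimately show ?thesis by simp
  qed
  have intI: "integrable MM (\<lambda>x. indicator (A - C) x + indicator (U' - A) x :: real)"
  proof (rule Bochner_Integration.integrable_add)
    show "integrable MM (indicator (A - C) :: real \<Rightarrow> real)" by (rule int_ind[OF bA])
    show "integrable MM (indicator (U' - A) :: real \<Rightarrow> real)" by (rule int_ind[OF bU])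
  qed
  have "nrm2 (\<lambda>x. indicator A x - complex_of_real (\<phi> x)) \<le> integral\<^sup>L MM (\<lambda>x. indicator (A - C) x + indicator (U' - A) x :: real)"
    unfolding nrm2_def
    by (rule integral_mono[OF sqi_int[OF sqi_diff[OF sqi_indicator[OF A] sp]] intI pw])
  also have "\<dots> = measure MM (A - C) + measure MM (U' - A)"
    using int_ind[OF bA] int_ind[OF bU] sAC sUA by (simp add: Int_absorb2)
  also have "\<dots> = measure lebesgue (A - C) + measure lebesgue (U' - A)"
    by (simp add: measure_MM_borel[OF bA sAC] measure_MM_borel[OF bU sUA])
  also have "\<dots> < \<eta>" using mAC mUA \<eta> unfolding e_def by linarith
  finally show "\<exists>h'. sqi h' \<and> appr h' \<and> nrm2 (\<lambda>x. indicator A x - h' x) < \<eta>"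
    using sp ap by blast
qed


lemma appr_null:
  assumes "Z \<in> sets borel" "Z \<subseteq> {-pi..pi}" "measure lebesgue Z = 0"
  shows "appr (indicator Z)"
  unfolding appr_def
proof (intro allI impI)
  fix \<eta> :: real assume \<eta>: "\<eta> > 0"
  have "nrm2 (\<lambda>x. indicator Z x - 0) = integral\<^sup>L MM (indicator Z :: real \<Rightarrow> real)"
    unfolding nrm2_def by (intro Bochner_Integration.integral_cong) (auto simp: indicator_def)
  also have "\<dots> = measure MM Z" using assms(2) by (simp add: Int_absorb2)
  also have "\<dots> = 0" using measure_MM_borel[OF assms(1,2)] assms(3) by simp
  finally show "\<exists>T. istp T \<and> nrm2 (\<lambda>x. indicator Z x - T x) < \<eta>"
    using istp_const[of 0] \<eta> by (intro exI[where x="\<lambda>x. 0"]) auto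
qed

lemma appr_ind:
  assumes A: "A \<in> sets borel"
  shows "appr (indicator A)"
proof -
  define I where "I = A \<inter> {0<..<pi}"
  define J where "J = A \<inter> {-pi<..<0}"
  define Z where "Z = A \<inter> {-pi, 0, pi}"
  have bI: "I \<in> sets borel" and bJ: "J \<in> sets borel" and bZ: "Z \<in> sets borel"
    unfolding I_def J_def Z_def using A by auto
  have aI: "appr (indicator I)" by (rule appr_ind_int[OF bI, of 0 pi]) (auto simp: I_def)
  have aJ: "appr (indicator J)" by (rule appr_ind_int[OF bJ, of "-pi" 0]) (auto simp: J_def)
  have "measure lborel Z = 0"
    using finite_imp_null_set_lborel[of "{-pi, 0, pi}"] unfolding Z_def
    by (metis finite.emptyI finite.insertI finite_Int measure_eq_0_null_sets finite_imp_null_set_lborel)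
  then have mZ: "measure lebesgue Z = 0" using bZ by simp
  have aZ: "appr (indicator Z)" by (rule appr_null[OF bZ _ mZ]) (auto simp: Z_def)
  have aIJ: "appr (\<lambda>x. indicator I x + indicator J x)"
    by (rule appr_add[OF sqi_indicator[OF bI] sqi_indicator[OF bJ] aI aJ])
  have aIJZ: "appr (\<lambda>x. (indicator I x + indicator J x) + indicator Z x)"
    by (rule appr_add[OF sqi_add[OF sqi_indicator[OF bI] sqi_indicator[OF bJ]] sqi_indicator[OF bZ] aIJ aZ])
  show ?thesis
  proof (rule appr_cong[OF _ aIJZ])
    fix x :: real assume x: "x \<in> {-pi..pi}"
    show "(indicator A x :: complex) = indicator I x + indicator J x + indicator Z x"
    proof (cases "x \<in> A")
      case False then show ?thesis by (simp add: I_def J_def Z_def indicator_def)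
    next
      case True
      consider "x = -pi" | "-pi < x \<and> x < 0" | "x = 0" | "0 < x \<and> x < pi" | "x = pi"
        using x by force
      then show ?thesis using True by cases (auto simp: I_def J_def Z_def indicator_def)
    qed
  qed
qed

lemma appr_sum:
  assumes "finite S" "\<And>y. y \<in> S \<Longrightarrow> sqi (f y) \<and> appr (f y)"
  shows "appr (\<lambda>x. \<Sum>y\<in>S. f y x)"
  using assms
proof (induction S rule: finite_induct)
  case empty then show ?case using appr_zero by simp
next
  case (insert a S)
  have s: "sqi (\<lambda>x. \<Sum>y\<in>S. f y x)" by (rule sqi_sum) (use insert in auto)
  have "appr (\<lambda>x. f a x + (\<Sum>y\<in>S. f y x))"
    by (rule appr_add) (use insert s in auto)
  then show ?case using insert by simp
qed

lemma appr_simple: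
  assumes s: "simple_function MM s"
  shows "appr s"
proof -
  define B where "B = (\<lambda>y. s -` {y} \<inter> space MM)"
  have Bs: "B y \<in> sets MM" for y unfolding B_def using simple_functionD(2)[OF s] .
  have Bb: "B y \<in> sets borel" for y
    using Bs[of y] unfolding MM_def by (simp add: sets_restrict_space_iff[OF Icc_sets])
  have fin: "finite (s ` space MM)" by (rule simple_functionD(1)[OF s])
  have rep: "s x = (\<Sum>y\<in>s ` space MM. y * indicator (B y) x)" if x: "x \<in> {-pi..pi}" for x
  proof -
    have xs: "x \<in> space MM" using x by simp
    have "s x = (\<Sum>y\<in>s ` space MM. indicator (B y) x *\<^sub>R y)"
      unfolding B_def by (rule simple_function_indicator_representation_banach[OF s xs])
    also have "\<dots> = (\<Sum>y\<in>s ` space MM. y * indicator (B y) x)"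
    proof (rule sum.cong[OF refl])
      fix y
      show "indicator (B y) x *\<^sub>R y = y * indicator (B y) x"
        by (cases "x \<in> B y") simp_all
    qed
    finally show ?thesis .
  qed
  have "appr (\<lambda>x. \<Sum>y\<in>s ` space MM. y * indicator (B y) x)"
  proof (rule appr_sum[OF fin])
    fix y
    show "sqi (\<lambda>x. y * indicator (B y) x) \<and> appr (\<lambda>x. y * indicator (B y) x)"
      using sqi_cmult[OF sqi_indicator[OF Bb]] appr_cmult[OF appr_ind[OF Bb]] by blast
  qed
  then show ?thesis
    by (intro appr_cong[where h=s and h'="\<lambda>x. \<Sum>y\<in>s ` space MM. y * indicator (B y) x"] rep)
qed

lemma appr_all:
  assumes g: "sqi g"
  shows "appr g"
proof (rule appr_limit[OF g])
  fix \<eta> :: real assume \<eta>: "\<eta> > 0"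
  have gm[measurable]: "g \<in> borel_measurable MM" using g by (rule sqi_meas)
  obtain F where F: "\<And>i. simple_function MM (F i)" "\<And>x. x \<in> space MM \<Longrightarrow> (\<lambda>i. F i x) \<longlonglongrightarrow> g x"
    "\<And>i x. x \<in> space MM \<Longrightarrow> dist (F i x) 0 \<le> 2 * dist (g x) 0"
    using borel_measurable_implies_sequence_metric[OF gm, of 0] by blast
  have Fm[measurable]: "F i \<in> borel_measurable MM" for i by (rule borel_measurable_simple_function[OF F(1)])
  have Fb: "cmod (F i x) \<le> 2 * cmod (g x)" if "x \<in> space MM" for i x using F(3)[OF that, of i] by simp
  have sF: "sqi (F i)" for i
    unfolding sqi_def
  proof
    show "F i \<in> borel_measurable MM" by (rule Fm)
    have "integrable MM (\<lambda>x. 4 * (cmod (g x))\<^sup>2)"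
      using g by (intro Bochner_Integration.integrable_mult_right sqi_int)
    then show "integrable MM (\<lambda>x. (cmod (F i x))\<^sup>2)"
    proof (rule Bochner_Integration.integrable_bound)
      show "(\<lambda>x. (cmod (F i x))\<^sup>2) \<in> borel_measurable MM" by measurable
      show "AE x in MM. norm ((cmod (F i x))\<^sup>2) \<le> norm (4 * (cmod (g x))\<^sup>2)"
      proof (rule AE_I2)
        fix x assume x: "x \<in> space MM"
        have "(cmod (F i x))\<^sup>2 \<le> (2 * cmod (g x))\<^sup>2" by (rule power_mono[OF Fb[OF x]]) simp
        then show "norm ((cmod (F i x))\<^sup>2) \<le> norm (4 * (cmod (g x))\<^sup>2)" by (simp add: power_mult_distrib)
      qed
    qed
  qed
  have lim: "(\<lambda>i. integral\<^sup>L MM (\<lambda>x. (cmod (g x - F i x))\<^sup>2)) \<longlonglongrightarrow> integral\<^sup>L MM (\<lambda>x. 0::real)"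
  proof (rule integral_dominated_convergence[where w="\<lambda>x. 9 * (cmod (g x))\<^sup>2"])
    show "(\<lambda>x. 0::real) \<in> borel_measurable MM" by simp
    show "\<And>i. (\<lambda>x. (cmod (g x - F i x))\<^sup>2) \<in> borel_measurable MM" by measurable
    show "integrable MM (\<lambda>x. 9 * (cmod (g x))\<^sup>2)"
      using g by (intro Bochner_Integration.integrable_mult_right sqi_int)
    show "AE x in MM. (\<lambda>i. (cmod (g x - F i x))\<^sup>2) \<longlonglongrightarrow> 0"
    proof (rule AE_I2)
      fix x assume x: "x \<in> space MM"
      have "(\<lambda>i. g x - F i x) \<longlonglongrightarrow> g x - g x" by (rule tendsto_diff[OF tendsto_const F(2)[OF x]])
      then have "(\<lambda>i. g x - F i x) \<longlonglongrightarrow> 0" by simp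
      then have "(\<lambda>i. cmod (g x - F i x)) \<longlonglongrightarrow> 0" by (rule tendsto_norm_zero)
      from tendsto_power[OF this, of 2] show "(\<lambda>i. (cmod (g x - F i x))\<^sup>2) \<longlonglongrightarrow> 0" by simp
    qed
    show "AE x in MM. norm ((cmod (g x - F i x))\<^sup>2) \<le> 9 * (cmod (g x))\<^sup>2" for i
    proof (rule AE_I2)
      fix x assume x: "x \<in> space MM"
      have "cmod (g x - F i x) \<le> cmod (g x) + cmod (F i x)" by (rule norm_triangle_ineq4)
      also have "\<dots> \<le> 3 * cmod (g x)" using Fb[OF x, of i] by simp
      finally have "(cmod (g x - F i x))\<^sup>2 \<le> (3 * cmod (g x))\<^sup>2" by (rule power_mono) simp
      then show "norm ((cmod (g x - F i x))\<^sup>2) \<le> 9 * (cmod (g x))\<^sup>2" by (simp add: power_mult_distrib)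
    qed
  qed
  then have "(\<lambda>i. nrm2 (\<lambda>x. g x - F i x)) \<longlonglongrightarrow> 0" unfolding nrm2_def by simp
  from LIMSEQ_D[OF this \<eta>] obtain i where "norm (nrm2 (\<lambda>x. g x - F i x) - 0) < \<eta>" by blast
  then have "nrm2 (\<lambda>x. g x - F i x) < \<eta>" using nrm2_nonneg[of "\<lambda>x. g x - F i x"] by simp
  then show "\<exists>h'. sqi h' \<and> appr h' \<and> nrm2 (\<lambda>x. g x - h' x) < \<eta>"
    using sF appr_simple[OF F(1)] by blast
qed

lemma density: "sqi g \<Longrightarrow> \<eta> > 0 \<Longrightarrow> \<exists>F t. finite F \<and> nrm2 (\<lambda>x. g x - tp F t x) < \<eta>"
proof -
  assume "sqi g" "\<eta> > 0"
  then obtain T where "istp T" "nrm2 (\<lambda>x. g x - T x) < \<eta>" using appr_all unfolding appr_def by blast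
  then show ?thesis using istp_eq by blast
qed


lemma cmod_exp_minus1: "(cmod (exp (\<i> * of_real x) - 1))\<^sup>2 = 2 - 2 * cos x"
proof -
  have "exp (\<i> * of_real x) - 1 = Complex (cos x - 1) (sin x)"
    by (simp add: complex_eq_iff Re_exp Im_exp)
  then have "(cmod (exp (\<i> * of_real x) - 1))\<^sup>2 = (cos x - 1)\<^sup>2 + (sin x)\<^sup>2"
    by (simp add: cmod_power2)
  also have "\<dots> = 2 - 2 * cos x"
    using sin_cos_squared_add[of x] by (simp add: power2_diff)
  finally show ?thesis .
qed

lemma cos_ge_on:
  assumes "\<bar>x\<bar> \<le> \<omega>" "\<omega> \<le> pi"
  shows "cos \<omega> \<le> cos x"
proof -
  have "cos \<omega> \<le> cos \<bar>x\<bar>"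
    using assms by (intro cos_monotone_0_pi_le) auto
  then show ?thesis by simp
qed

lemma key_pw:
  assumes f: "f \<in> paley_wiener \<omega>" and \<omega>: "0 \<le> \<omega>" "\<omega> \<le> pi" and F: "finite F"
  shows "(\<Sum>j\<in>F. (cmod (f (j+1) - f j))\<^sup>2) \<le> (2 - 2 * cos \<omega>) * infsum (\<lambda>j. (cmod (f j))\<^sup>2) UNIV"
proof -
  from f have ell: "ell2_int f" unfolding paley_wiener_def by simp
  from f obtain g :: "real \<Rightarrow> complex" where
    gm: "g \<in> borel_measurable lborel" and
    gi: "set_integrable lborel {-pi..pi} (\<lambda>\<xi>. (cmod (g \<xi>))\<^sup>2)" and
    gz: "AE \<xi> in lborel. \<xi> \<in> {-pi..pi} - {-\<omega>..\<omega>} \<longrightarrow> g \<xi> = 0" and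
    gf: "\<And>j::int. f j = (1 / (2 * complex_of_real pi)) *
            (LINT \<xi>:{-pi..pi}|lborel. g \<xi> * exp (\<i> * of_int j * of_real \<xi>))"
    unfolding paley_wiener_def by blast
  have gmM[measurable]: "g \<in> borel_measurable MM" using gm by (rule measurable_MM)
  have sg: "sqi g"
    unfolding sqi_def
  proof
    show "g \<in> borel_measurable MM" by (rule gmM)
    show "integrable MM (\<lambda>x. (cmod (g x))\<^sup>2)"
      using gi unfolding MM_def set_integrable_def by (simp add: integrable_restrict_space[OF Icc_sets])
  qed
  have ipf: "ip g (ee j) = 2 * complex_of_real pi * f j" for j
  proof -
    have "ip g (ee j) = integral\<^sup>L MM (\<lambda>x. g x * exp (\<i> * of_int j * of_real x))"
      unfolding ip_def ee_def by (simp add: exp_cnj)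
    also have "\<dots> = (LINT \<xi>:{-pi..pi}|lborel. g \<xi> * exp (\<i> * of_int j * of_real \<xi>))"
      by (rule MM_integral_eq_LINT)
    finally show ?thesis using gf[of j] by simp
  qed
  have cf: "(cmod (ip g (ee j)))\<^sup>2 = (4 * pi\<^sup>2) * (cmod (f j))\<^sup>2" for j
    unfolding ipf by (simp add: norm_mult power_mult_distrib)
  have summf: "(\<lambda>j. (cmod (f j))\<^sup>2) summable_on UNIV" using ell unfolding ell2_int_def .
  have summ: "(\<lambda>j. (cmod (ip g (ee j)))\<^sup>2) summable_on UNIV"
    unfolding cf by (rule summable_on_cmult_right[OF summf])
  have X: "infsum (\<lambda>j. (cmod (ip g (ee j)))\<^sup>2) UNIV = 4 * pi\<^sup>2 * infsum (\<lambda>j. (cmod (f j))\<^sup>2) UNIV"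
    unfolding cf by (rule infsum_cmult_right[OF summf])
  define N where "N = infsum (\<lambda>j. (cmod (f j))\<^sup>2) UNIV"
  have pars: "nrm2 g \<le> 2 * pi * N"
  proof -
    have "nrm2 g \<le> infsum (\<lambda>j. (cmod (ip g (ee j)))\<^sup>2) UNIV / (2*pi)"
      by (rule parseval_ge[OF sg density summ]) (use sg in auto)
    also have "\<dots> = 2 * pi * N" unfolding X N_def by (simp add: power2_eq_square)
    finally show ?thesis .
  qed
  define h where "h = (\<lambda>x. g x * (exp (\<i> * of_real x) - 1))"
  have hm[measurable]: "h \<in> borel_measurable MM" unfolding h_def by measurable
  have sh: "sqi h"
    unfolding sqi_def
  proof
    show "h \<in> borel_measurable MM" by (rule hm)
    have "integrable MM (\<lambda>x. 4 * (cmod (g x))\<^sup>2)"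
      using sg by (intro Bochner_Integration.integrable_mult_right sqi_int)
    then show "integrable MM (\<lambda>x. (cmod (h x))\<^sup>2)"
    proof (rule Bochner_Integration.integrable_bound)
      show "(\<lambda>x. (cmod (h x))\<^sup>2) \<in> borel_measurable MM" by measurable
      show "AE x in MM. norm ((cmod (h x))\<^sup>2) \<le> norm (4 * (cmod (g x))\<^sup>2)"
      proof (intro AE_I2)
        fix x
        have "(cmod (h x))\<^sup>2 = (cmod (g x))\<^sup>2 * (2 - 2 * cos x)"
          unfolding h_def by (simp add: norm_mult power_mult_distrib cmod_exp_minus1)
        also have "\<dots> \<le> (cmod (g x))\<^sup>2 * 4"
        proof (rule mult_left_mono)
          show "2 - 2 * cos x \<le> 4" using cos_ge_minus_one[of x] by linarith
        qed simp
        finally show "norm ((cmod (h x))\<^sup>2) \<le> norm (4 * (cmod (g x))\<^sup>2)" by (simp add: mult.commute)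
      qed
    qed
  qed
  have iph: "ip h (ee j) = 2 * complex_of_real pi * (f (j+1) - f j)" for j
  proof -
    have e: "h x * cnj (ee j x) = g x * cnj (ee (j+1) x) - g x * cnj (ee j x)" for x
      unfolding h_def ee_def by (simp add: exp_cnj algebra_simps exp_add[symmetric])
    have "ip h (ee j) = ip g (ee (j+1)) - ip g (ee j)"
      unfolding ip_def e using int_prod[OF sg sqi_ee] by simp
    then show ?thesis unfolding ipf by (simp add: algebra_simps)
  qed
  have nh: "nrm2 h \<le> (2 - 2 * cos \<omega>) * nrm2 g"
  proof -
    have "AE x in lborel. x \<in> {-pi..pi} \<longrightarrow> (x \<in> {-pi..pi} - {-\<omega>..\<omega>} \<longrightarrow> g x = 0)"
      using gz by eventually_elim blast
    then have AEM: "AE x in MM. x \<in> {-pi..pi} - {-\<omega>..\<omega>} \<longrightarrow> g x = 0"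
      unfolding MM_def by (simp only: AE_restrict_space_iff[OF Icc_sets])
    have "nrm2 h \<le> integral\<^sup>L MM (\<lambda>x. (2 - 2 * cos \<omega>) * (cmod (g x))\<^sup>2)"
      unfolding nrm2_def
    proof (rule integral_mono_AE)
      show "integrable MM (\<lambda>x. (cmod (h x))\<^sup>2)" using sh by (rule sqi_int)
      show "integrable MM (\<lambda>x. (2 - 2 * cos \<omega>) * (cmod (g x))\<^sup>2)"
        using sg by (intro Bochner_Integration.integrable_mult_right sqi_int)
      show "AE x in MM. (cmod (h x))\<^sup>2 \<le> (2 - 2 * cos \<omega>) * (cmod (g x))\<^sup>2"
        using AEM
      proof (rule AE_mp)
        show "AE x in MM. (x \<in> {-pi..pi} - {-\<omega>..\<omega>} \<longrightarrow> g x = 0) \<longrightarrow> (cmod (h x))\<^sup>2 \<le> (2 - 2 * cos \<omega>) * (cmod (g x))\<^sup>2"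
        proof (rule AE_I2, rule impI)
          fix x assume x: "x \<in> space MM" and z: "x \<in> {-pi..pi} - {-\<omega>..\<omega>} \<longrightarrow> g x = 0"
          have hx: "(cmod (h x))\<^sup>2 = (2 - 2 * cos x) * (cmod (g x))\<^sup>2"
            unfolding h_def by (simp add: norm_mult power_mult_distrib cmod_exp_minus1 mult.commute)
          show "(cmod (h x))\<^sup>2 \<le> (2 - 2 * cos \<omega>) * (cmod (g x))\<^sup>2"
          proof (cases "x \<in> {-\<omega>..\<omega>}")
            case True
            then have "cos \<omega> \<le> cos x" using \<omega> by (intro cos_ge_on) auto
            then show ?thesis unfolding hx by (intro mult_right_mono) auto
          next
            case False
            then have "g x = 0" using z x by simp
            then show ?thesis unfolding hx by simp
          qed
        qed
      qed
    qed
    also have "\<dots> = (2 - 2 * cos \<omega>) * nrm2 g" unfolding nrm2_def by simp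
    finally show ?thesis .
  qed
  have s0: "0 \<le> 2 - 2 * cos \<omega>" using cos_le_one[of \<omega>] by simp
  have "(\<Sum>j\<in>F. (cmod (f (j+1) - f j))\<^sup>2) = (\<Sum>j\<in>F. (cmod (ip h (ee j)))\<^sup>2) / (4 * pi\<^sup>2)"
    unfolding iph by (simp add: norm_mult power_mult_distrib sum_divide_distrib)
  also have "\<dots> \<le> (2 * pi * nrm2 h) / (4 * pi\<^sup>2)"
    by (intro divide_right_mono bessel[OF sh F]) simp
  also have "\<dots> \<le> (2 * pi * ((2 - 2 * cos \<omega>) * (2 * pi * N))) / (4 * pi\<^sup>2)"
  proof (intro divide_right_mono mult_left_mono)
    show "nrm2 h \<le> (2 - 2 * cos \<omega>) * (2 * pi * N)"
      using nh mult_left_mono[OF pars s0] by linarith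
  qed auto
  also have "\<dots> = (2 - 2 * cos \<omega>) * N" by (simp add: power2_eq_square)
  finally show ?thesis unfolding N_def .
qed


theorem corollary5p2:
  fixes k :: int and \<omega> :: real
  assumes "k > 0" and "odd k" and "0 \<le> \<omega>" and "\<omega> \<le> pi"
  shows "((real_of_int k + 1) / 2 * sqrt (2 - 2 * cos \<omega>) < 1 \<longrightarrow>
           (\<forall>f \<in> paley_wiener \<omega>.
              (1 - (real_of_int k + 1) / 2 * sqrt (2 - 2 * cos \<omega>)) / sqrt (real_of_int k)
                * l2norm_on UNIV f
              \<le> l2norm_on ((\<lambda>m. k * m) ` UNIV) f
            \<and> l2norm_on ((\<lambda>m. k * m) ` UNIV) f
              \<le> (1 + (real_of_int k + 1) / 2 * sqrt (2 - 2 * cos \<omega>)) / sqrt (real_of_int k)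
                * l2norm_on UNIV f))
       \<and> ((real_of_int k + 1) * sqrt (2 - 2 * cos \<omega>) < 1 \<longrightarrow>
           ((1 + (real_of_int k + 1) / 2 * sqrt (2 - 2 * cos \<omega>)) / sqrt (real_of_int k))
           / ((1 - (real_of_int k + 1) / 2 * sqrt (2 - 2 * cos \<omega>)) / sqrt (real_of_int k))
           \<le> 1 + 2 * (real_of_int k + 1) * sqrt (2 - 2 * cos \<omega>))"
proof -
  define s where "s = sqrt (2 - 2 * cos \<omega>)"
  define a where "a = (real_of_int k + 1) / 2 * s"
  have s0: "0 \<le> s" unfolding s_def using cos_le_one[of \<omega>] by simp
  have k0: "0 < real_of_int k" using assms(1) by simp
  have sk: "0 < sqrt (real_of_int k)" using k0 by simp
  have a0: "0 \<le> a" unfolding a_def using s0 k0 by simp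
  have part2: "(real_of_int k + 1) * s < 1 \<longrightarrow> ((1 + a) / sqrt k) / ((1 - a) / sqrt k) \<le> 1 + 2 * (real_of_int k + 1) * s"
  proof
    assume h: "(real_of_int k + 1) * s < 1"
    then have a2: "a < 1/2" unfolding a_def by simp
    have "((1 + a) / sqrt k) / ((1 - a) / sqrt k) = (1 + a) / (1 - a)" using sk by simp
    also have "\<dots> \<le> 1 + 4 * a"
    proof -
      have m: "a * a \<le> a * (1/2)" using a0 a2 by (intro mult_left_mono) auto
      have e: "(1 + 4 * a) * (1 - a) = 1 + 3 * a - 4 * (a * a)" by (simp add: algebra_simps)
      have "1 + a \<le> (1 + 4 * a) * (1 - a)" unfolding e using m by linarith
      then show ?thesis using a2 by (simp add: divide_le_eq)
    qed
    also have "\<dots> = 1 + 2 * (real_of_int k + 1) * s" unfolding a_def by simp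
    finally show "((1 + a) / sqrt k) / ((1 - a) / sqrt k) \<le> 1 + 2 * (real_of_int k + 1) * s" .
  qed
  obtain R where kR: "k = 2 * R + 1" using assms(2) by (rule oddE)
  have R0: "0 \<le> R" using assms(1) kR by simp
  have Ra: "real_of_int R * s \<le> a"
    unfolding a_def using kR R0 s0 by (intro mult_right_mono) auto
  have part1: "a < 1 \<longrightarrow> (\<forall>f \<in> paley_wiener \<omega>.
      (1 - a) / sqrt k * l2norm_on UNIV f \<le> l2norm_on ((\<lambda>m. k * m) ` UNIV) f
      \<and> l2norm_on ((\<lambda>m. k * m) ` UNIV) f \<le> (1 + a) / sqrt k * l2norm_on UNIV f)"
  proof (intro impI ballI)
    fix f assume f: "f \<in> paley_wiener \<omega>"
    have summ: "(\<lambda>j. (cmod (f j))\<^sup>2) summable_on UNIV"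
      using f unfolding paley_wiener_def ell2_int_def by simp
    have key: "(\<Sum>j\<in>F. (cmod (f(j+1) - f j))\<^sup>2) \<le> s\<^sup>2 * infsum (\<lambda>j. (cmod (f j))\<^sup>2) UNIV" if "finite F" for F
    proof -
      have "s\<^sup>2 = 2 - 2 * cos \<omega>" unfolding s_def using cos_le_one[of \<omega>] by simp
      then show ?thesis using key_pw[OF f assms(3,4) that] by simp
    qed
    define N where "N = infsum (\<lambda>j. (cmod (f j))\<^sup>2) UNIV"
    define NS where "NS = infsum (\<lambda>j. (cmod (f j))\<^sup>2) (range (\<lambda>m. k*m))"
    have n1: "l2norm_on UNIV f = sqrt N" unfolding l2norm_on_def N_def ..
    have n2: "l2norm_on ((\<lambda>m. k * m) ` UNIV) f = sqrt NS" unfolding l2norm_on_def NS_def ..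
    have "0 \<le> N" unfolding N_def by (rule infsum_nonneg) simp
    then have N0: "0 \<le> sqrt N" by simp
    have S1: "sqrt N \<le> sqrt k * sqrt NS + R * s * sqrt N"
      using sampling(1)[OF summ kR R0 s0 key] unfolding N_def NS_def .
    have S2: "sqrt k * sqrt NS \<le> sqrt N + R * s * sqrt N"
      using sampling(2)[OF summ kR R0 s0 key] unfolding N_def NS_def .
    have RsN: "R * s * sqrt N \<le> a * sqrt N" by (rule mult_right_mono[OF Ra N0])
    have "(1 - a) * sqrt N \<le> sqrt k * sqrt NS" using S1 RsN by (simp add: algebra_simps)
    then have L: "(1 - a) / sqrt k * sqrt N \<le> sqrt NS"
      using sk by (simp add: field_simps)
    have "sqrt k * sqrt NS \<le> (1 + a) * sqrt N" using S2 RsN by (simp add: algebra_simps)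
    then have U: "sqrt NS \<le> (1 + a) / sqrt k * sqrt N"
      using sk by (simp add: field_simps)
    show "(1 - a) / sqrt k * l2norm_on UNIV f \<le> l2norm_on ((\<lambda>m. k * m) ` UNIV) f
      \<and> l2norm_on ((\<lambda>m. k * m) ` UNIV) f \<le> (1 + a) / sqrt k * l2norm_on UNIV f"
      unfolding n1 n2 using L U by simp
  qed
  show ?thesis using part1 part2 unfolding a_def s_def by simp
qed


end
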